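(* In the setting below, $d(V)\subseteq V$, and the cochain complex $V$ is acyclic (has zero cohomology).
   Context: A complex subspace arrangement in $\mathbb{C}^l$ is a finite set of complex linear subspaces of $\mathbb{C}^l$ with no two distinct members $x\subset y$. For a finite set $\mathcal{C}$ of linear subspaces of a complex vector space $W$ with a linear order, $D(\mathcal{C})$ is the cochain complex over $\mathbb{Q}$ with basis all subsets $\sigma\subseteq\mathcal{C}$, where with $\vee\sigma=\bigcap_{x\in\sigma}x$ ($\vee\emptyset=W$), $\deg\sigma=2\operatorname{codim}_W(\vee\sigma)-|\sigma|$ and for $\sigma=\{x_{i_1},\dots,x_{i_r}\}$ in increasing order, $d\sigma=\sum_{j:\vee(\sigma\setminus\{x_{i_j}\})=\vee\sigma}(-1)^j(\sigma\setminus\{x_{i_j}\})$. Setting: $\mathcal{A}=\{x_0,\dots,x_n\}$ is a complex subspace arrangement in $\mathbb{C}^l$, $\mathcal{A}'=\mathcal{A}\setminus\{x_0\}$; on $\mathcal{A}'$, $y\sim z$ iff $x_0\cap y=x_0\cap z$, with classes $\mathcal{A}_1,\dots,\mathcal{A}_r$; the linear order is $x_0<x_1<\dots<x_n$ with elements of $\mathcal{A}_i$ preceding elements of $\mathcal{A}_j$ whenever $i<j$. $D(\mathcal{A}')$ is the subcomplex of $D(\mathcal{A})$ spanned by subsets not containing $x_0$. $E=\{(y,z)\in\mathcal{A}'\times\mathcal{A}'\mid y\sim z,\ y\ne z\}$. For $(u,v)\in E$, $I_{u,v}$ is the subspace of the quotient complex $D(\mathcal{A})/D(\mathcal{A}')$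 spanned by the classes of all $\{x_0,u\}\cup Y-\{x_0,v\}\cup Y$ and all $\{x_0,u,v\}\cup Y$, for $Y\subseteq\mathcal{A}\setminus\{x_0,u,v\}$, and $V=\sum_{(u,v)\in E}I_{u,v}$. *)

theory Defs
  imports "HOL-Analysis.Analysis"
begin

definition csubspace :: "(complex^'n) set \<Rightarrow> bool" where
  "csubspace S \<longleftrightarrow> 0 \<in> S \<and> (\<forall>x\<in>S. \<forall>y\<in>S. x + y \<in> S) \<and> (\<forall>(c::complex) x. x \<in> S \<longrightarrow> c *s x \<in> S)"

definition subspace_arrangement :: "(complex^'n) set set \<Rightarrow> bool" where
  "subspace_arrangement A \<longleftrightarrow> finite A \<and> (\<forall>x\<in>A. csubspace x) \<and> (\<forall>x\<in>A. \<forall>y\<in>A. x \<subseteq> y \<longrightarrow> x = y)"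

text \<open>The linear order on the arrangement is given by a distinct list xs = [x0,...,xn].\<close>
definition before :: "'a list \<Rightarrow> 'a \<Rightarrow> 'a \<Rightarrow> bool" where
  "before xs y x \<longleftrightarrow> (\<exists>i j. i < j \<and> j < length xs \<and> xs ! i = y \<and> xs ! j = x)"

text \<open>Number of elements of sigma strictly below x; x is then the (pos+1)-th element.\<close>
definition pos :: "'a list \<Rightarrow> 'a set \<Rightarrow> 'a \<Rightarrow> nat" where
  "pos xs \<sigma> x = card {y \<in> \<sigma>. before xs y x}"

text \<open>Cochains of D(C) over Q: rational coefficient functions on subsets of C.\<close>
definition cochains :: "'a set \<Rightarrow> ('a set \<Rightarrow> rat) set" where
  "cochains C = {f. \<forall>\<sigma>. f \<sigma> \<noteq> 0 \<longrightarrow> \<sigma> \<subseteq> C}"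

definition bas :: "'a set \<Rightarrow> ('a set \<Rightarrow> rat)" where
  "bas \<sigma> = (\<lambda>\<tau>. if \<tau> = \<sigma> then 1 else 0)"

text \<open>Coefficient of tau in d(sigma); the join of sigma is the intersection (Inter {} = UNIV = W).\<close>
definition dbas :: "'v set list \<Rightarrow> 'v set set \<Rightarrow> 'v set set \<Rightarrow> rat" where
  "dbas xs \<sigma> \<tau> = (\<Sum>x\<in>\<sigma>. if \<tau> = \<sigma> - {x} \<and> \<Inter>(\<sigma> - {x}) = \<Inter>\<sigma>
                       then (-1) ^ (pos xs \<sigma> x + 1) else 0)"

definition dcx :: "'v set list \<Rightarrow> ('v set set \<Rightarrow> rat) \<Rightarrow> ('v set set \<Rightarrow> rat)" where
  "dcx xs f = (\<lambda>\<tau>. \<Sum>\<sigma>\<in>Pow (set xs). f \<sigma> * dbas xs \<sigma> \<tau>)"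

definition qspan :: "('a set \<Rightarrow> rat) set \<Rightarrow> ('a set \<Rightarrow> rat) set" where
  "qspan G = {f. \<exists>S c. finite S \<and> S \<subseteq> G \<and> f = (\<lambda>t. \<Sum>g\<in>S. c g * g t)}"

text \<open>E = pairs of distinct equivalent elements of A' = set (tl xs), x0 = hd xs.\<close>
definition edges :: "'v set list \<Rightarrow> ('v set \<times> 'v set) set" where
  "edges xs = {(y, z). y \<in> set (tl xs) \<and> z \<in> set (tl xs) \<and> hd xs \<inter> y = hd xs \<inter> z \<and> y \<noteq> z}"

text \<open>Representatives in D(A) of the spanning elements of the I_{u,v}.\<close>
definition Igens :: "'v set list \<Rightarrow> ('v set set \<Rightarrow> rat) set" where
  "Igens xs =
    {(\<lambda>t. bas (insert (hd xs) (insert u Y)) t - bas (insert (hd xs) (insert v Y)) t) | u v Y.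
        (u, v) \<in> edges xs \<and> Y \<subseteq> set xs - {hd xs, u, v}}
    \<union> {bas (insert (hd xs) (insert u (insert v Y))) | u v Y.
        (u, v) \<in> edges xs \<and> Y \<subseteq> set xs - {hd xs, u, v}}"

text \<open>Preimage of V under the projection D(A) -> D(A)/D(A'), i.e. V + D(A').\<close>
definition Vpre :: "'v set list \<Rightarrow> ('v set set \<Rightarrow> rat) set" where
  "Vpre xs = qspan (Igens xs \<union> {bas \<sigma> | \<sigma>. \<sigma> \<subseteq> set (tl xs)})"

end

theory Submission
  imports Defs
begin

locale arr =
  fixes xs :: "'v set list"
  assumes ne: "xs \<noteq> []" and dist: "distinct xs"
  and contig: "\<forall>i j k. 1 \<le> i \<and> i < j \<and> j < k \<and> k < length xs \<and>
           hd xs \<inter> xs ! i = hd xs \<inter> xs ! k \<longrightarrow> hd xs \<inter> xs ! j = hd xs \<inter> xs ! i"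
begin

abbreviation "A \<equiv> set xs"
abbreviation "A' \<equiv> set (tl xs)"
abbreviation "x0 \<equiv> hd xs"
abbreviation "bf \<equiv> before xs"

lemma before_nth: "i < length xs \<Longrightarrow> j < length xs \<Longrightarrow> bf (xs!i) (xs!j) \<longleftrightarrow> i < j"
proof
  assume i: "i < length xs" and j: "j < length xs" and "bf (xs!i) (xs!j)"
  then obtain i' j' where "i' < j'" "j' < length xs" "xs!i' = xs!i" "xs!j' = xs!j"
    unfolding before_def by blast
  then show "i < j" using dist nth_eq_iff_index_eq i j by (metis order.strict_trans)
next
  assume "i < length xs" "j < length xs" "i < j"
  then show "bf (xs!i) (xs!j)" unfolding before_def by blast
qed

lemma bf_in: "bf y x \<Longrightarrow> y \<in> A \<and> x \<in> A"
  unfolding before_def by auto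

lemma bf_irrefl: "\<not> bf x x"
  unfolding before_def using dist nth_eq_iff_index_eq by (metis order_less_irrefl order.strict_trans)

lemma bf_asym: "bf x y \<Longrightarrow> \<not> bf y x"
  unfolding before_def using dist nth_eq_iff_index_eq
  by (metis order.strict_trans order_less_asym)

lemma bf_trans: "bf x y \<Longrightarrow> bf y z \<Longrightarrow> bf x z"
  unfolding before_def using dist nth_eq_iff_index_eq
  by (metis order.strict_trans)

lemma bf_total: "x \<in> A \<Longrightarrow> y \<in> A \<Longrightarrow> x \<noteq> y \<Longrightarrow> bf x y \<or> bf y x"
  unfolding before_def by (metis in_set_conv_nth linorder_neqE_nat)

lemma A_eq: "A = insert x0 A'"
  using ne by (cases xs) auto

lemma x0_notin: "x0 \<notin> A'"
  using ne dist by (cases xs) auto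

lemma A'_nth: "y \<in> A' \<longleftrightarrow> (\<exists>j. 1 \<le> j \<and> j < length xs \<and> y = xs ! j)"
proof
  assume "y \<in> A'"
  then obtain i where "i < length (tl xs)" "y = tl xs ! i" by (metis in_set_conv_nth)
  then show "\<exists>j. 1 \<le> j \<and> j < length xs \<and> y = xs ! j"
    using ne by (intro exI[of _ "Suc i"]) (auto simp: nth_tl)
next
  assume "\<exists>j. 1 \<le> j \<and> j < length xs \<and> y = xs ! j"
  then obtain j where j: "1 \<le> j" "j < length xs" "y = xs ! j" by blast
  then have "y = tl xs ! (j - 1)" "j - 1 < length (tl xs)" by (auto simp: nth_tl)
  then show "y \<in> A'" by (metis nth_mem)
qed

lemma x0_nth: "x0 = xs ! 0"
  using ne by (simp add: hd_conv_nth)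

lemma contig': assumes "a \<in> A'" "x \<in> A'" "x0 \<inter> a = x0 \<inter> x" "bf a z" "bf z x"
  shows "z \<in> A' \<and> x0 \<inter> z = x0 \<inter> a"
proof -
  obtain i where i: "1 \<le> i" "i < length xs" "a = xs ! i" using assms(1) A'_nth by blast
  obtain k where k: "1 \<le> k" "k < length xs" "x = xs ! k" using assms(2) A'_nth by blast
  obtain j where j: "j < length xs" "z = xs ! j" using bf_in assms(4) by (metis in_set_conv_nth)
  have "i < j" using before_nth i j assms(4) by simp
  moreover have "j < k" using before_nth k j assms(5) by simp
  ultimately have "x0 \<inter> z = x0 \<inter> a" using contig i j k assms(3) by metis
  moreover have "z \<in> A'" unfolding A'_nth using j \<open>i < j\<close> i by (intro exI[of _ j]) auto
  ultimately show ?thesis by blast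
qed

lemma x0_bf: "y \<in> A' \<Longrightarrow> bf x0 y"
  using A'_nth before_nth x0_nth ne by (metis length_greater_0_conv less_le_trans zero_less_one)

lemma pos_insert: "finite s \<Longrightarrow> a \<notin> s \<Longrightarrow> pos xs (insert a s) x = pos xs s x + (if bf a x then 1 else 0)"
proof -
  assume f: "finite s" and a: "a \<notin> s"
  have "{y \<in> insert a s. bf y x} = (if bf a x then insert a {y \<in> s. bf y x} else {y \<in> s. bf y x})" by auto
  then show ?thesis unfolding pos_def using f a by auto
qed

lemma pos_remove: "finite s \<Longrightarrow> x \<in> s \<Longrightarrow> pos xs s y = pos xs (s - {x}) y + (if bf x y then 1 else 0)"
  using pos_insert[of "s - {x}" x y] by (simp add: insert_absorb)


definition ops :: "('v set set \<Rightarrow> 'v set set \<Rightarrow> rat) \<Rightarrow> ('v set set \<Rightarrow> rat) \<Rightarrow> ('v set set \<Rightarrow> rat)" where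
  "ops M f = (\<lambda>\<tau>. \<Sum>\<sigma>\<in>Pow A. f \<sigma> * M \<sigma> \<tau>)"

lemma dcx_ops: "dcx xs = ops (dbas xs)"
  unfolding dcx_def ops_def by (rule ext) simp

lemma bas_mult: "bas \<sigma> \<rho> * x = (if \<rho> = \<sigma> then x else 0)"
  unfolding bas_def by simp
lemma bas_mult': "x * bas \<sigma> \<rho> = (if \<sigma> = \<rho> then x else 0)"
  unfolding bas_def by auto

lemma ops_bas: "\<sigma> \<in> Pow A \<Longrightarrow> ops M (bas \<sigma>) = M \<sigma>"
  unfolding ops_def by (rule ext) (simp add: bas_mult)

lemma ops_comp: "ops M (ops N f) = ops (\<lambda>\<sigma>. ops M (N \<sigma>)) f"
proof (rule ext)
  fix \<tau>
  have "ops M (ops N f) \<tau> = (\<Sum>\<rho>\<in>Pow A. \<Sum>\<sigma>\<in>Pow A. f \<sigma> * N \<sigma> \<rho> * M \<rho> \<tau>)"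
    unfolding ops_def by (simp add: sum_distrib_right)
  also have "\<dots> = (\<Sum>\<sigma>\<in>Pow A. \<Sum>\<rho>\<in>Pow A. f \<sigma> * N \<sigma> \<rho> * M \<rho> \<tau>)"
    by (rule sum.swap)
  also have "\<dots> = ops (\<lambda>\<sigma>. ops M (N \<sigma>)) f \<tau>"
    unfolding ops_def by (simp add: sum_distrib_left mult.assoc)
  finally show "ops M (ops N f) \<tau> = ops (\<lambda>\<sigma>. ops M (N \<sigma>)) f \<tau>" .
qed

lemma ops_diff: "ops M (\<lambda>t. f t - g t) = (\<lambda>t. ops M f t - ops M g t)"
  unfolding ops_def by (rule ext) (simp add: left_diff_distrib sum_subtractf)

lemma ops_add: "ops M (\<lambda>t. f t + g t) = (\<lambda>t. ops M f t + ops M g t)"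
  unfolding ops_def by (rule ext) (simp add: distrib_right sum.distrib)

lemma ops_zero: "ops M (\<lambda>t. 0) = (\<lambda>t. 0)"
  unfolding ops_def by simp

lemma ops_kernel_diff: "ops (\<lambda>\<sigma> t. M \<sigma> t - N \<sigma> t) f = (\<lambda>t. ops M f t - ops N f t)"
  unfolding ops_def by (rule ext) (simp add: right_diff_distrib sum_subtractf)

lemma ops_cong: "(\<And>\<sigma>. \<sigma> \<in> Pow A \<Longrightarrow> f \<sigma> \<noteq> 0 \<Longrightarrow> M \<sigma> = N \<sigma>) \<Longrightarrow> ops M f = ops N f"
  unfolding ops_def by (intro ext sum.cong refl) (metis PowD mult_zero_left)

lemma expand: "f \<in> cochains A \<Longrightarrow> ops bas f = f"
proof (rule ext)
  fix \<tau> assume f: "f \<in> cochains A"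
  have "ops bas f \<tau> = (\<Sum>\<sigma>\<in>Pow A. if \<sigma> = \<tau> then f \<sigma> else 0)"
    unfolding ops_def by (simp add: bas_mult')
  also have "\<dots> = (if \<tau> \<in> Pow A then f \<tau> else 0)" by (simp add: sum.delta')
  also have "\<dots> = f \<tau>" using f unfolding cochains_def by auto
  finally show "ops bas f \<tau> = f \<tau>" .
qed

lemma ops_cochains: "(\<And>\<sigma>. \<sigma> \<in> Pow A \<Longrightarrow> f \<sigma> \<noteq> 0 \<Longrightarrow> M \<sigma> \<in> cochains B) \<Longrightarrow> ops M f \<in> cochains B"
proof -
  assume h: "\<And>\<sigma>. \<sigma> \<in> Pow A \<Longrightarrow> f \<sigma> \<noteq> 0 \<Longrightarrow> M \<sigma> \<in> cochains B"
  show ?thesis unfolding cochains_def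
  proof (intro CollectI allI impI)
    fix \<tau> assume "ops M f \<tau> \<noteq> 0"
    then obtain \<sigma> where "\<sigma> \<in> Pow A" "f \<sigma> * M \<sigma> \<tau> \<noteq> 0"
      unfolding ops_def by (meson sum.not_neutral_contains_not_neutral)
    then show "\<tau> \<subseteq> B" using h[of \<sigma>] unfolding cochains_def by auto
  qed
qed

lemma cochains_diff: "f \<in> cochains B \<Longrightarrow> g \<in> cochains B \<Longrightarrow> (\<lambda>t. f t - g t) \<in> cochains B"
proof -
  assume f: "f \<in> cochains B" and g: "g \<in> cochains B"
  show ?thesis unfolding cochains_def
  proof (intro CollectI allI impI)
    fix \<sigma> assume "f \<sigma> - g \<sigma> \<noteq> 0"
    then have "f \<sigma> \<noteq> 0 \<or> g \<sigma> \<noteq> 0" by auto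
    then show "\<sigma> \<subseteq> B" using f g unfolding cochains_def by blast
  qed
qed
lemma cochains_add: "f \<in> cochains B \<Longrightarrow> g \<in> cochains B \<Longrightarrow> (\<lambda>t. f t + g t) \<in> cochains B"
proof -
  assume f: "f \<in> cochains B" and g: "g \<in> cochains B"
  show ?thesis unfolding cochains_def
  proof (intro CollectI allI impI)
    fix \<sigma> assume "f \<sigma> + g \<sigma> \<noteq> 0"
    then have "f \<sigma> \<noteq> 0 \<or> g \<sigma> \<noteq> 0" by auto
    then show "\<sigma> \<subseteq> B" using f g unfolding cochains_def by blast
  qed
qed
lemma cochains_zero: "(\<lambda>t. 0) \<in> cochains B"
  unfolding cochains_def by auto
lemma cochains_mono: "f \<in> cochains B \<Longrightarrow> B \<subseteq> C \<Longrightarrow> f \<in> cochains C"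
  unfolding cochains_def by auto
lemma bas_cochains: "\<sigma> \<subseteq> B \<Longrightarrow> bas \<sigma> \<in> cochains B"
  unfolding cochains_def bas_def by auto

lemma qspan_zero: "(\<lambda>t. 0) \<in> qspan G"
  unfolding qspan_def by (rule CollectI, rule exI[of _ "{}"]) auto

lemma qspan_gen: "g \<in> G \<Longrightarrow> g \<in> qspan G"
  unfolding qspan_def by (rule CollectI, rule exI[of _ "{g}"], rule exI[of _ "\<lambda>_. 1"]) auto

lemma qspan_add: assumes "f \<in> qspan G" "g \<in> qspan G" shows "(\<lambda>t. f t + g t) \<in> qspan G"
proof -
  obtain S c where S: "finite S" "S \<subseteq> G" "f = (\<lambda>t. \<Sum>g\<in>S. c g * g t)" using assms(1) unfolding qspan_def by blast
  obtain S' c' where S': "finite S'" "S' \<subseteq> G" "g = (\<lambda>t. \<Sum>g\<in>S'. c' g * g t)" using assms(2) unfolding qspan_def by blast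
  define c2 where "c2 = (\<lambda>h. (if h \<in> S then c h else 0) + (if h \<in> S' then c' h else 0))"
  have "(\<lambda>t. f t + g t) = (\<lambda>t. \<Sum>h\<in>S \<union> S'. c2 h * h t)"
  proof
    fix t
    have e: "c2 h * h t = (if h \<in> S then c h * h t else 0) + (if h \<in> S' then c' h * h t else 0)" for h
      unfolding c2_def by (simp add: distrib_right)
    have "(\<Sum>h\<in>S \<union> S'. c2 h * h t) = (\<Sum>h\<in>S \<union> S'. (if h \<in> S then c h * h t else 0)) + (\<Sum>h\<in>S \<union> S'. (if h \<in> S' then c' h * h t else 0))"
      unfolding e by (simp add: sum.distrib)
    also have "\<dots> = (\<Sum>h\<in>S. c h * h t) + (\<Sum>h\<in>S'. c' h * h t)"
      using S S' by (simp add: sum.If_cases Int_absorb1 Int_absorb2)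
    finally show "f t + g t = (\<Sum>h\<in>S \<union> S'. c2 h * h t)" using S S' by simp
  qed
  then show ?thesis unfolding qspan_def
    by (intro CollectI exI[of _ "S \<union> S'"] exI[of _ c2]) (use S S' in auto)
qed

lemma qspan_scale: assumes "f \<in> qspan G" shows "(\<lambda>t. a * f t) \<in> qspan G"
proof -
  obtain S c where S: "finite S" "S \<subseteq> G" "f = (\<lambda>t. \<Sum>g\<in>S. c g * g t)" using assms(1) unfolding qspan_def by blast
  have "(\<lambda>t. a * f t) = (\<lambda>t. \<Sum>g\<in>S. (a * c g) * g t)" using S by (simp add: sum_distrib_left mult.assoc)
  then show ?thesis unfolding qspan_def
    by (intro CollectI exI[of _ S] exI[of _ "\<lambda>g. a * c g"]) (use S in auto)
qed

lemma qspan_sum: "finite I \<Longrightarrow> (\<And>i. i \<in> I \<Longrightarrow> F i \<in> qspan G) \<Longrightarrow> (\<lambda>t. \<Sum>i\<in>I. c i * F i t) \<in> qspan G"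
proof (induction I rule: finite_induct)
  case empty then show ?case using qspan_zero by simp
next
  case (insert x I')
  have ih: "(\<lambda>t. \<Sum>i\<in>I'. c i * F i t) \<in> qspan G" by (rule insert.IH, rule insert.prems, simp)
  have fx: "F x \<in> qspan G" by (rule insert.prems) simp
  have eq: "(\<lambda>t. \<Sum>i\<in>insert x I'. c i * F i t) = (\<lambda>t. c x * F x t + (\<Sum>i\<in>I'. c i * F i t))"
    using insert.hyps by (simp add: sum.insert)
  show ?case unfolding eq by (rule qspan_add[OF qspan_scale[OF fx] ih])
qed

lemma qspan_diff: assumes "f \<in> qspan G" "g \<in> qspan G" shows "(\<lambda>t. f t - g t) \<in> qspan G"
proof -
  have "(\<lambda>t. f t - g t) = (\<lambda>t. f t + (-1) * g t)" by simp
  then show ?thesis using qspan_add[OF assms(1) qspan_scale[OF assms(2), of "-1"]] by metis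
qed

lemma ops_qspan: "(\<And>\<sigma>. \<sigma> \<in> Pow A \<Longrightarrow> f \<sigma> \<noteq> 0 \<Longrightarrow> M \<sigma> \<in> qspan G) \<Longrightarrow> ops M f \<in> qspan G"
proof -
  assume h: "\<And>\<sigma>. \<sigma> \<in> Pow A \<Longrightarrow> f \<sigma> \<noteq> 0 \<Longrightarrow> M \<sigma> \<in> qspan G"
  have "ops M f = ops (\<lambda>\<sigma>. if f \<sigma> = 0 then (\<lambda>t. 0) else M \<sigma>) f"
    by (rule ops_cong) auto
  also have "\<dots> \<in> qspan G" unfolding ops_def
    by (rule qspan_sum) (auto intro: h qspan_zero)
  finally show ?thesis .
qed


definition sg :: "'v set set \<Rightarrow> 'v set \<Rightarrow> rat" where
  "sg \<sigma> x = (-1) ^ (pos xs \<sigma> x + 1)"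

definition cnd :: "'v set set \<Rightarrow> 'v set \<Rightarrow> bool" where
  "cnd \<sigma> x \<longleftrightarrow> \<Inter>(\<sigma> - {x}) = \<Inter>\<sigma>"

lemma dbas_eq: "dbas xs \<sigma> \<tau> = (\<Sum>x\<in>\<sigma>. if \<tau> = \<sigma> - {x} \<and> cnd \<sigma> x then sg \<sigma> x else 0)"
  unfolding dbas_def sg_def cnd_def by simp

lemma dbas_collapse: assumes "\<sigma> \<subseteq> A"
  shows "(\<Sum>\<rho>\<in>Pow A. dbas xs \<sigma> \<rho> * G \<rho>) = (\<Sum>x\<in>\<sigma>. if cnd \<sigma> x then sg \<sigma> x * G (\<sigma> - {x}) else 0)"
proof -
  have "(\<Sum>\<rho>\<in>Pow A. dbas xs \<sigma> \<rho> * G \<rho>) = (\<Sum>\<rho>\<in>Pow A. \<Sum>x\<in>\<sigma>. if \<rho> = \<sigma> - {x} then (if cnd \<sigma> x then sg \<sigma> x * G \<rho> else 0) else 0)"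
    unfolding dbas_eq sum_distrib_right by (intro sum.cong refl) simp
  also have "\<dots> = (\<Sum>x\<in>\<sigma>. \<Sum>\<rho>\<in>Pow A. if \<rho> = \<sigma> - {x} then (if cnd \<sigma> x then sg \<sigma> x * G \<rho> else 0) else 0)"
    by (rule sum.swap)
  also have "\<dots> = (\<Sum>x\<in>\<sigma>. if cnd \<sigma> x then sg \<sigma> x * G (\<sigma> - {x}) else 0)"
    using assms by (intro sum.cong refl) (auto simp: sum.delta)
  finally show ?thesis .
qed

lemma antisym_sum: fixes F :: "'a \<Rightarrow> 'a \<Rightarrow> rat"
  assumes "finite S" "\<And>x y. x \<in> S \<Longrightarrow> y \<in> S \<Longrightarrow> x \<noteq> y \<Longrightarrow> F x y = - F y x"
  shows "(\<Sum>x\<in>S. \<Sum>y\<in>S - {x}. F x y) = 0"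
proof -
  define D where "D = Sigma S (\<lambda>x. S - {x})"
  have e: "(\<Sum>x\<in>S. \<Sum>y\<in>S - {x}. F x y) = (\<Sum>(x,y)\<in>D. F x y)"
    unfolding D_def by (rule sum.Sigma) (use assms(1) in auto)
  have "(\<Sum>(x,y)\<in>D. F x y) = (\<Sum>(x,y)\<in>D. F y x)"
    by (rule sum.reindex_bij_witness[of _ prod.swap prod.swap]) (auto simp: D_def)
  also have "\<dots> = (\<Sum>(x,y)\<in>D. - F x y)"
  proof (rule sum.cong[OF refl])
    fix p assume "p \<in> D"
    then obtain x y where p: "p = (x,y)" "x \<in> S" "y \<in> S" "x \<noteq> y" unfolding D_def by auto
    have "F y x = - F x y" using assms(2)[OF p(3) p(2)] p(4) by simp
    then show "(case p of (x, y) \<Rightarrow> F y x) = (case p of (x, y) \<Rightarrow> - F x y)" using p(1) by simp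
  qed
  also have "\<dots> = - (\<Sum>(x,y)\<in>D. F x y)"
    by (simp add: sum_negf[symmetric] case_prod_beta)
  finally show ?thesis using e by simp
qed

lemma cnd_swap: "cnd \<sigma> x \<and> cnd (\<sigma> - {x}) y \<Longrightarrow> cnd \<sigma> y \<and> cnd (\<sigma> - {y}) x"
proof -
  assume h: "cnd \<sigma> x \<and> cnd (\<sigma> - {x}) y"
  have e: "\<Inter>(\<sigma> - {x} - {y}) = \<Inter>\<sigma>" using h unfolding cnd_def by simp
  have "\<Inter>\<sigma> \<subseteq> \<Inter>(\<sigma> - {y})" by (rule Inter_anti_mono) auto
  moreover have "\<Inter>(\<sigma> - {y}) \<subseteq> \<Inter>(\<sigma> - {x} - {y})" by (rule Inter_anti_mono) auto
  ultimately have "\<Inter>(\<sigma> - {y}) = \<Inter>\<sigma>" using e by auto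
  moreover have "\<sigma> - {y} - {x} = \<sigma> - {x} - {y}" by auto
  ultimately show ?thesis unfolding cnd_def using e by simp
qed

lemma sg_swap: assumes "finite \<sigma>" "x \<in> \<sigma>" "y \<in> \<sigma>" "x \<noteq> y" "x \<in> A" "y \<in> A"
  shows "sg \<sigma> x * sg (\<sigma> - {x}) y = - (sg \<sigma> y * sg (\<sigma> - {y}) x)"
proof -
  have *: "sg \<sigma> x * sg (\<sigma> - {x}) y = - (sg \<sigma> y * sg (\<sigma> - {y}) x)" if b: "bf y x" "x \<in> \<sigma>" "y \<in> \<sigma>" for x y
  proof -
    have "pos xs \<sigma> y = pos xs (\<sigma> - {x}) y" using pos_remove[OF assms(1) b(2), of y] bf_asym[OF b(1)] by simp
    moreover have "pos xs \<sigma> x = pos xs (\<sigma> - {y}) x + 1" using pos_remove[OF assms(1) b(3), of x] b(1) by simp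
    ultimately show ?thesis unfolding sg_def by (simp add: power_add)
  qed
  show ?thesis using bf_total[OF assms(5,6,4)] *[of x y] *[of y x] assms by (auto simp: algebra_simps)
qed

lemma dd_ker: assumes "\<sigma> \<subseteq> A" shows "(\<Sum>\<rho>\<in>Pow A. dbas xs \<sigma> \<rho> * dbas xs \<rho> \<tau>) = 0"
proof -
  have fin: "finite \<sigma>" using assms finite_subset by blast
  define F where "F x y = (if cnd \<sigma> x \<and> cnd (\<sigma> - {x}) y \<and> \<tau> = \<sigma> - {x} - {y} then sg \<sigma> x * sg (\<sigma> - {x}) y else 0)" for x y
  have "(\<Sum>\<rho>\<in>Pow A. dbas xs \<sigma> \<rho> * dbas xs \<rho> \<tau>) = (\<Sum>x\<in>\<sigma>. if cnd \<sigma> x then sg \<sigma> x * dbas xs (\<sigma> - {x}) \<tau> else 0)"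
    by (rule dbas_collapse[OF assms])
  also have "\<dots> = (\<Sum>x\<in>\<sigma>. \<Sum>y\<in>\<sigma> - {x}. F x y)"
  proof (rule sum.cong[OF refl])
    fix x assume "x \<in> \<sigma>"
    show "(if cnd \<sigma> x then sg \<sigma> x * dbas xs (\<sigma> - {x}) \<tau> else 0) = (\<Sum>y\<in>\<sigma> - {x}. F x y)"
      unfolding dbas_eq F_def sum_distrib_left by (cases "cnd \<sigma> x") (simp_all, intro sum.cong refl, auto)
  qed
  also have "\<dots> = 0"
  proof (rule antisym_sum[OF fin])
    fix x y assume xy: "x \<in> \<sigma>" "y \<in> \<sigma>" "x \<noteq> y"
    have eq: "\<sigma> - {x} - {y} = \<sigma> - {y} - {x}" by auto
    have c: "(cnd \<sigma> x \<and> cnd (\<sigma> - {x}) y) = (cnd \<sigma> y \<and> cnd (\<sigma> - {y}) x)"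
      using cnd_swap[of \<sigma> x y] cnd_swap[of \<sigma> y x] by blast
    have xyA: "x \<in> A" "y \<in> A" using xy assms by auto
    have sgs: "sg \<sigma> x * sg (\<sigma> - {x}) y = - (sg \<sigma> y * sg (\<sigma> - {y}) x)"
      by (rule sg_swap[OF fin xy xyA])
    show "F x y = - F y x"
    proof (cases "cnd \<sigma> x \<and> cnd (\<sigma> - {x}) y \<and> \<tau> = \<sigma> - {x} - {y}")
      case True
      then have "cnd \<sigma> y \<and> cnd (\<sigma> - {y}) x \<and> \<tau> = \<sigma> - {y} - {x}" using c eq by simp
      then show ?thesis using True sgs unfolding F_def by simp
    next
      case False
      then have n2: "\<not> (cnd \<sigma> y \<and> cnd (\<sigma> - {y}) x \<and> \<tau> = \<sigma> - {y} - {x})" using c unfolding eq by blast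
      have "F x y = 0" unfolding F_def by (rule if_not_P[OF False])
      moreover have "F y x = 0" unfolding F_def by (rule if_not_P[OF n2])
      ultimately show ?thesis by simp
    qed
  qed
  finally show ?thesis .
qed

lemma dd: "dcx xs (dcx xs f) = (\<lambda>t. 0)"
  unfolding dcx_ops ops_comp
proof -
  have "ops (\<lambda>\<sigma>. ops (dbas xs) (dbas xs \<sigma>)) f = ops (\<lambda>\<sigma> t. 0) f"
    by (rule ops_cong) (auto simp: ops_def dd_ker)
  then show "ops (\<lambda>\<sigma>. ops (dbas xs) (dbas xs \<sigma>)) f = (\<lambda>t. 0)" by (simp add: ops_def)
qed


definition cls :: "'v set \<Rightarrow> 'v set set \<Rightarrow> 'v set set" where
  "cls b \<sigma> = {y \<in> \<sigma>. y \<noteq> x0 \<and> x0 \<inter> y = x0 \<inter> b}"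

definition e :: "'v set \<Rightarrow> 'v set set \<Rightarrow> 'v set set option" where
  "e b \<sigma> = (if x0 \<notin> \<sigma> then None else if cls b \<sigma> = {} then Some \<sigma>
     else if card (cls b \<sigma>) = 1 then Some (insert b (\<sigma> - cls b \<sigma>)) else None)"

definition optb :: "'v set set option \<Rightarrow> ('v set set \<Rightarrow> rat)" where
  "optb q = (if q = None then (\<lambda>_. 0) else bas (the q))"

definition Eop :: "'v set \<Rightarrow> ('v set set \<Rightarrow> rat) \<Rightarrow> ('v set set \<Rightarrow> rat)" where
  "Eop b = ops (\<lambda>\<sigma>. optb (e b \<sigma>))"

definition hk :: "'v set \<Rightarrow> 'v set set \<Rightarrow> ('v set set \<Rightarrow> rat)" where
  "hk b \<sigma> = (if x0 \<in> \<sigma> \<and> b \<notin> \<sigma> \<and> cls b \<sigma> \<noteq> {} then (\<lambda>t. sg \<sigma> b * bas (insert b \<sigma>) t) else (\<lambda>t. 0))"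

definition hop :: "'v set \<Rightarrow> ('v set set \<Rightarrow> rat) \<Rightarrow> ('v set set \<Rightarrow> rat)" where
  "hop b = ops (hk b)"

definition rep :: "'v set \<Rightarrow> bool" where
  "rep b \<longleftrightarrow> b \<in> A' \<and> (\<forall>y\<in>A'. x0 \<inter> y = x0 \<inter> b \<longrightarrow> \<not> bf y b)"

lemma rep_facts: "rep b \<Longrightarrow> b \<in> A' \<and> b \<in> A \<and> b \<noteq> x0"
  unfolding rep_def using A_eq x0_notin by auto

lemma cnd_true: assumes "x0 \<in> \<sigma>" "y \<in> \<sigma>" "y \<noteq> x" "x \<noteq> x0" "x0 \<inter> y = x0 \<inter> x"
  shows "cnd \<sigma> x"
proof -
  have "\<Inter>(\<sigma> - {x}) \<subseteq> x0 \<inter> y" using assms by auto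
  then have "\<Inter>(\<sigma> - {x}) \<subseteq> x" using assms(5) by auto
  moreover have "\<Inter>\<sigma> \<subseteq> \<Inter>(\<sigma> - {x})" by (rule Inter_anti_mono) auto
  moreover have "\<Inter>(\<sigma> - {x}) \<inter> x \<subseteq> \<Inter>\<sigma>" by auto
  ultimately show ?thesis unfolding cnd_def by blast
qed

lemma cnd_ins_eq: assumes "x0 \<in> \<sigma>" "y \<in> \<sigma>" "y \<noteq> x" "x \<noteq> x0" "x0 \<inter> y = x0 \<inter> b" "x \<noteq> b"
  shows "cnd (insert b \<sigma>) x \<longleftrightarrow> cnd \<sigma> x"
proof -
  have s1: "\<Inter>(\<sigma> - {x}) \<subseteq> b" using assms by auto
  have s2: "\<Inter>\<sigma> \<subseteq> b" using assms by auto
  have "\<Inter>(insert b \<sigma> - {x}) = \<Inter>(\<sigma> - {x})"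
  proof -
    have "insert b \<sigma> - {x} = insert b (\<sigma> - {x})" using assms(6) by auto
    then show ?thesis using s1 by auto
  qed
  moreover have "\<Inter>(insert b \<sigma>) = \<Inter>\<sigma>" using s2 by auto
  ultimately show ?thesis unfolding cnd_def by simp
qed

lemma sg_cancel: assumes "finite \<sigma>" "b \<notin> \<sigma>" "x \<in> \<sigma>" "b \<in> A" "x \<in> A"
  shows "sg \<sigma> b * sg (insert b \<sigma>) x + sg \<sigma> x * sg (\<sigma> - {x}) b = 0"
proof -
  have xb: "x \<noteq> b" using assms by auto
  have p1: "pos xs (insert b \<sigma>) x = pos xs \<sigma> x + (if bf b x then 1 else 0)" by (rule pos_insert[OF assms(1,2)])
  have p2: "pos xs \<sigma> b = pos xs (\<sigma> - {x}) b + (if bf x b then 1 else 0)" by (rule pos_remove[OF assms(1,3)])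
  show ?thesis
  proof (cases "bf b x")
    case True
    then have "\<not> bf x b" using bf_asym by blast
    then show ?thesis using p1 p2 True unfolding sg_def by (simp add: power_add)
  next
    case False
    then have "bf x b" using bf_total[OF assms(4,5)] xb by blast
    then show ?thesis using p1 p2 False unfolding sg_def by (simp add: power_add)
  qed
qed

lemma rep_before: assumes "rep b" "x \<in> A'" "x0 \<inter> x = x0 \<inter> b" "x \<noteq> b" shows "bf b x"
  using assms bf_total rep_facts A_eq unfolding rep_def by blast

lemma pos_single: assumes "rep b" "b \<notin> \<sigma>" "\<sigma> \<subseteq> A" "cls b \<sigma> = {x}"
  shows "pos xs \<sigma> x = pos xs \<sigma> b" "bf b x"
proof -
  have x: "x \<in> \<sigma>" "x \<noteq> x0" "x0 \<inter> x = x0 \<inter> b" using assms(4) unfolding cls_def by auto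
  have xA: "x \<in> A'" using x assms(3) A_eq by auto
  have bA: "b \<in> A'" "b \<in> A" using rep_facts[OF assms(1)] by auto
  show bx: "bf b x" using rep_before[OF assms(1) xA x(3)] x(1) assms(2) by blast
  have "{y \<in> \<sigma>. bf y x} = {y \<in> \<sigma>. bf y b}"
  proof (intro Collect_cong conj_cong refl iffI)
    fix y assume y: "y \<in> \<sigma>" "bf y x"
    show "bf y b"
    proof (rule ccontr)
      assume "\<not> bf y b"
      moreover have "y \<noteq> b" using y assms(2) by auto
      ultimately have "bf b y" using bf_total[of y b] y assms(3) bA by auto
      then have "y \<in> A' \<and> x0 \<inter> y = x0 \<inter> b" using contig'[OF bA(1) xA _ _ y(2)] x(3) by auto
      then have "y \<in> cls b \<sigma>" using y x0_notin unfolding cls_def by auto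
      then have "y = x" using assms(4) by auto
      then show False using y(2) bf_irrefl by simp
    qed
  next
    fix y assume "y \<in> \<sigma>" "bf y b" then show "bf y x" using bf_trans bx by blast
  qed
  then show "pos xs \<sigma> x = pos xs \<sigma> b" unfolding pos_def by simp
qed


lemma fin_sub: "\<sigma> \<subseteq> A \<Longrightarrow> finite \<sigma>"
  using finite_subset by blast

lemma ops_sbas: "\<rho> \<in> Pow A \<Longrightarrow> ops M (\<lambda>t. c * bas \<rho> t) \<tau> = c * M \<rho> \<tau>"
proof -
  assume r: "\<rho> \<in> Pow A"
  have "ops M (\<lambda>t. c * bas \<rho> t) \<tau> = c * ops M (bas \<rho>) \<tau>"
    unfolding ops_def by (simp add: sum_distrib_left mult.assoc)
  then show ?thesis using ops_bas[OF r] by simp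
qed

lemma DH_eq: assumes "\<sigma> \<subseteq> A" "b \<in> A"
  shows "ops (dbas xs) (hk b \<sigma>) \<tau> = (if x0 \<in> \<sigma> \<and> b \<notin> \<sigma> \<and> cls b \<sigma> \<noteq> {} then sg \<sigma> b * dbas xs (insert b \<sigma>) \<tau> else 0)"
proof (cases "x0 \<in> \<sigma> \<and> b \<notin> \<sigma> \<and> cls b \<sigma> \<noteq> {}")
  case True
  then have "hk b \<sigma> = (\<lambda>t. sg \<sigma> b * bas (insert b \<sigma>) t)" by (simp add: hk_def)
  then show ?thesis using ops_sbas[of "insert b \<sigma>" "dbas xs" "sg \<sigma> b" \<tau>] assms True by simp
next
  case False
  then have "hk b \<sigma> = (\<lambda>t. 0)" unfolding hk_def by (rule if_not_P)
  then show ?thesis using False by (auto simp: ops_def)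
qed

lemma HD_eq: assumes "\<sigma> \<subseteq> A"
  shows "ops (hk b) (dbas xs \<sigma>) \<tau> = (\<Sum>x\<in>\<sigma>. if cnd \<sigma> x then sg \<sigma> x * hk b (\<sigma> - {x}) \<tau> else 0)"
  unfolding ops_def using dbas_collapse[OF assms, of "\<lambda>\<rho>. hk b \<rho> \<tau>"] by simp


end

context arr begin
lemma perx: assumes r: "rep b" and s: "\<sigma> \<subseteq> A" "x0 \<in> \<sigma>" "b \<notin> \<sigma>" "cls b \<sigma> \<noteq> {}"
  and x: "x \<in> \<sigma>" and t: "x0 \<in> \<tau>"
  shows "sg \<sigma> b * (if \<tau> = insert b \<sigma> - {x} \<and> cnd (insert b \<sigma>) x then sg (insert b \<sigma>) x else 0)
       + (if cnd \<sigma> x then sg \<sigma> x * hk b (\<sigma> - {x}) \<tau> else 0)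
       = (if cls b \<sigma> = {x} then - bas (insert b (\<sigma> - {x})) \<tau> else 0)"
proof -
  have bf: "b \<in> A'" "b \<in> A" "b \<noteq> x0" using rep_facts[OF r] by auto
  have fin: "finite \<sigma>" using fin_sub[OF s(1)] .
  have xb: "x \<noteq> b" using x s(3) by auto
  have xA: "x \<in> A" using x s(1) by auto
  show ?thesis
  proof (cases "x = x0")
    case True
    then have "\<tau> \<noteq> insert b \<sigma> - {x}" using t by auto
    moreover have "hk b (\<sigma> - {x}) = (\<lambda>t. 0)" using True unfolding hk_def by auto
    moreover have "cls b \<sigma> \<noteq> {x}" using True unfolding cls_def by auto
    ultimately show ?thesis by simp
  next
    case xn: False
    have eins: "insert b \<sigma> - {x} = insert b (\<sigma> - {x})" using xb by auto
    show ?thesis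
    proof (cases "cls b (\<sigma> - {x}) = {}")
      case True
      then have xc: "cls b \<sigma> = {x}" using s(4) unfolding cls_def by auto
      then have xcl: "x0 \<inter> x = x0 \<inter> b" unfolding cls_def by auto
      have "hk b (\<sigma> - {x}) = (\<lambda>t. 0)" using True unfolding hk_def by auto
      moreover have "cnd (insert b \<sigma>) x"
        by (rule cnd_true[of _ b]) (use s xb xn xcl in auto)
      moreover have "sg \<sigma> b * sg (insert b \<sigma>) x = -1"
      proof -
        have "pos xs \<sigma> x = pos xs \<sigma> b" "bf b x" using pos_single[OF r s(3) s(1) xc] by auto
        moreover have "pos xs (insert b \<sigma>) x = pos xs \<sigma> x + 1" using pos_insert[OF fin s(3)] \<open>bf b x\<close> by simp
        ultimately show ?thesis unfolding sg_def by (simp add: power_add)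
      qed
      ultimately show ?thesis using xc eins by (auto simp: bas_def)
    next
      case False
      then obtain y where y: "y \<in> \<sigma>" "y \<noteq> x" "y \<noteq> x0" "x0 \<inter> y = x0 \<inter> b" unfolding cls_def by auto
      have ce: "cnd (insert b \<sigma>) x \<longleftrightarrow> cnd \<sigma> x" by (rule cnd_ins_eq[OF s(2) y(1,2) xn y(4) xb])
      have nc: "cls b \<sigma> \<noteq> {x}" using y unfolding cls_def by auto
      have hk: "hk b (\<sigma> - {x}) \<tau> = sg (\<sigma> - {x}) b * bas (insert b (\<sigma> - {x})) \<tau>"
        using False s xn unfolding hk_def by auto
      have sgc: "sg \<sigma> b * sg (insert b \<sigma>) x + sg \<sigma> x * sg (\<sigma> - {x}) b = 0"
        by (rule sg_cancel[OF fin s(3) x bf(2) xA])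
      show ?thesis
      proof (cases "cnd \<sigma> x \<and> \<tau> = insert b (\<sigma> - {x})")
        case True
        then have "bas (insert b (\<sigma> - {x})) \<tau> = 1" by (simp add: bas_def)
        then show ?thesis using True ce nc hk sgc eins by (simp add: mult.assoc)
      next
        case F2: False
        show ?thesis
        proof (cases "cnd \<sigma> x")
          case True
          then have "\<tau> \<noteq> insert b (\<sigma> - {x})" using F2 by simp
          then have "bas (insert b (\<sigma> - {x})) \<tau> = 0" by (simp add: bas_def)
          then show ?thesis using \<open>\<tau> \<noteq> insert b (\<sigma> - {x})\<close> ce nc hk eins by simp
        next
          case False
          then show ?thesis using ce nc by simp
        qed
      qed
    qed
  qed
qed


lemma T0: assumes r: "rep b" and s: "\<sigma> \<subseteq> A" "x0 \<in> \<sigma>" and t: "x0 \<in> \<tau>"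
  shows "bas \<sigma> \<tau> - optb (e b \<sigma>) \<tau> - ops (dbas xs) (hk b \<sigma>) \<tau> - ops (hk b) (dbas xs \<sigma>) \<tau> = 0"
proof -
  have bf: "b \<in> A'" "b \<in> A" "b \<noteq> x0" using rep_facts[OF r] by auto
  have fin: "finite \<sigma>" using fin_sub[OF s(1)] .
  have finC: "finite (cls b \<sigma>)" using fin unfolding cls_def by auto
  note DH = DH_eq[OF s(1) bf(2), of \<tau>] and HD = HD_eq[OF s(1), of b \<tau>]
  show ?thesis
  proof (cases "b \<in> \<sigma>")
    case bin: True
    have hz: "x \<in> \<sigma> - {b} \<Longrightarrow> hk b (\<sigma> - {x}) = (\<lambda>t. 0)" for x using bin unfolding hk_def by auto
    have "ops (hk b) (dbas xs \<sigma>) \<tau> = (if cnd \<sigma> b then sg \<sigma> b * hk b (\<sigma> - {b}) \<tau> else 0)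
        + (\<Sum>x\<in>\<sigma> - {b}. if cnd \<sigma> x then sg \<sigma> x * hk b (\<sigma> - {x}) \<tau> else 0)"
      unfolding HD using sum.remove[OF fin bin] by blast
    also have "(\<Sum>x\<in>\<sigma> - {b}. if cnd \<sigma> x then sg \<sigma> x * hk b (\<sigma> - {x}) \<tau> else 0) = 0"
      using hz by (intro sum.neutral) auto
    finally have HD2: "ops (hk b) (dbas xs \<sigma>) \<tau> = (if cnd \<sigma> b then sg \<sigma> b * hk b (\<sigma> - {b}) \<tau> else 0)" by simp
    have ib: "insert b (\<sigma> - {b}) = \<sigma>" using bin by auto
    have DH0: "ops (dbas xs) (hk b \<sigma>) \<tau> = 0" using DH bin by simp
    show ?thesis
    proof (cases "cls b (\<sigma> - {b}) = {}")
      case True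
      then have "cls b \<sigma> = {b}" using bin bf unfolding cls_def by auto
      then have "e b \<sigma> = Some \<sigma>" using s(2) ib unfolding e_def by auto
      moreover have "hk b (\<sigma> - {b}) = (\<lambda>t. 0)" using True unfolding hk_def by auto
      ultimately show ?thesis using HD2 DH0 by (simp add: optb_def)
    next
      case False
      then obtain y where y: "y \<in> \<sigma>" "y \<noteq> b" "y \<noteq> x0" "x0 \<inter> y = x0 \<inter> b" unfolding cls_def by auto
      have "cnd \<sigma> b" by (rule cnd_true[OF s(2) y(1,2) bf(3) y(4)])
      have "{b, y} \<subseteq> cls b \<sigma>" using y bin bf unfolding cls_def by auto
      then have "card {b, y} \<le> card (cls b \<sigma>)" by (rule card_mono[OF finC])
      moreover have "card {b, y} = 2" using y(2) by simp
      ultimately have "card (cls b \<sigma>) \<ge> 2" by simp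
      then have "e b \<sigma> = None" using s(2) unfolding e_def by auto
      moreover have "hk b (\<sigma> - {b}) \<tau> = sg (\<sigma> - {b}) b * bas \<sigma> \<tau>"
        using False s(2) bf(3) ib unfolding hk_def by auto
      moreover have "sg \<sigma> b * sg (\<sigma> - {b}) b = 1"
        using pos_remove[OF fin bin, of b] bf_irrefl unfolding sg_def by (simp flip: power_add)
      ultimately show ?thesis using HD2 DH0 \<open>cnd \<sigma> b\<close> by (simp add: optb_def mult.assoc[symmetric])
    qed
  next
    case bn: False
    show ?thesis
    proof (cases "cls b \<sigma> = {}")
      case True
      have "e b \<sigma> = Some \<sigma>" using True s(2) unfolding e_def by auto
      moreover have "ops (dbas xs) (hk b \<sigma>) \<tau> = 0" using DH True by simp
      moreover have "ops (hk b) (dbas xs \<sigma>) \<tau> = 0"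
      proof -
        have hz0: "hk b (\<sigma> - {x}) = (\<lambda>t. 0)" for x using True unfolding hk_def cls_def by auto
        show ?thesis unfolding HD by (intro sum.neutral ballI) (simp add: hz0)
      qed
      ultimately show ?thesis by (simp add: optb_def)
    next
      case Cne: False
      then obtain y where y: "y \<in> \<sigma>" "y \<noteq> x0" "x0 \<inter> y = x0 \<inter> b" unfolding cls_def by auto
      have cb: "cnd (insert b \<sigma>) b"
        by (rule cnd_true[of _ y]) (use s y bn bf in auto)
      have sgb: "sg \<sigma> b * sg (insert b \<sigma>) b = 1"
        using pos_insert[OF fin bn, of b] bf_irrefl unfolding sg_def by (simp flip: power_add)
      define D where "D x = sg \<sigma> b * (if \<tau> = insert b \<sigma> - {x} \<and> cnd (insert b \<sigma>) x then sg (insert b \<sigma>) x else 0)" for x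
      define H where "H x = (if cnd \<sigma> x then sg \<sigma> x * hk b (\<sigma> - {x}) \<tau> else 0)" for x
      have "dbas xs (insert b \<sigma>) \<tau> = (if \<tau> = insert b \<sigma> - {b} \<and> cnd (insert b \<sigma>) b then sg (insert b \<sigma>) b else 0)
          + (\<Sum>x\<in>\<sigma>. if \<tau> = insert b \<sigma> - {x} \<and> cnd (insert b \<sigma>) x then sg (insert b \<sigma>) x else 0)"
        unfolding dbas_eq by (rule sum.insert[OF fin bn])
      moreover have "insert b \<sigma> - {b} = \<sigma>" using bn by auto
      ultimately have DH2: "ops (dbas xs) (hk b \<sigma>) \<tau> = (if \<tau> = \<sigma> then 1 else 0) + (\<Sum>x\<in>\<sigma>. D x)"
        unfolding DH D_def using bn Cne s(2) cb sgb by (simp add: sum_distrib_left distrib_left)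
      have HD2: "ops (hk b) (dbas xs \<sigma>) \<tau> = (\<Sum>x\<in>\<sigma>. H x)" unfolding HD H_def by simp
      have sumDH: "(\<Sum>x\<in>\<sigma>. D x) + (\<Sum>x\<in>\<sigma>. H x) = (\<Sum>x\<in>\<sigma>. if cls b \<sigma> = {x} then - bas (insert b (\<sigma> - {x})) \<tau> else 0)"
        unfolding sum.distrib[symmetric] D_def H_def
        by (rule sum.cong[OF refl], rule perx[OF r s bn Cne _ t])
      show ?thesis
      proof (cases "card (cls b \<sigma>) = 1")
        case True
        then obtain x1 where x1: "cls b \<sigma> = {x1}" by (meson card_1_singletonE)
        then have x1s: "x1 \<in> \<sigma>" unfolding cls_def by auto
        have "(\<Sum>x\<in>\<sigma>. if cls b \<sigma> = {x} then - bas (insert b (\<sigma> - {x})) \<tau> else 0)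
             = (\<Sum>x\<in>\<sigma>. if x = x1 then - bas (insert b (\<sigma> - {x1})) \<tau> else 0)"
          using x1 by (intro sum.cong refl) auto
        also have "\<dots> = - bas (insert b (\<sigma> - {x1})) \<tau>" using x1s fin by simp
        finally have "(\<Sum>x\<in>\<sigma>. D x) + (\<Sum>x\<in>\<sigma>. H x) = - bas (insert b (\<sigma> - {x1})) \<tau>" using sumDH by simp
        moreover have "e b \<sigma> = Some (insert b (\<sigma> - {x1}))" using True x1 s(2) unfolding e_def by auto
        ultimately show ?thesis using DH2 HD2 by (simp add: optb_def bas_def)
      next
        case False
        have "cls b \<sigma> \<noteq> {x}" for x using False by auto
        then have "(\<Sum>x\<in>\<sigma>. D x) + (\<Sum>x\<in>\<sigma>. H x) = 0" using sumDH by simp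
        moreover have "e b \<sigma> = None" using False Cne s(2) unfolding e_def by auto
        ultimately show ?thesis using DH2 HD2 by (simp add: optb_def bas_def)
      qed
    qed
  qed
qed


abbreviation "dop \<equiv> ops (dbas xs)"

lemma e_sub: "b \<in> A \<Longrightarrow> \<sigma> \<subseteq> A \<Longrightarrow> e b \<sigma> = Some \<tau> \<Longrightarrow> \<tau> \<subseteq> A"
  unfolding e_def by (auto split: if_splits)

lemma optb_cochains: "b \<in> A \<Longrightarrow> \<sigma> \<subseteq> A \<Longrightarrow> optb (e b \<sigma>) \<in> cochains A"
  unfolding optb_def using e_sub[of b \<sigma>] by (auto intro: bas_cochains cochains_zero)

lemma hk_cochains: "b \<in> A \<Longrightarrow> \<sigma> \<subseteq> A \<Longrightarrow> hk b \<sigma> \<in> cochains A"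
  unfolding hk_def cochains_def bas_def by auto

lemma dbas_cochains: "dbas xs \<sigma> \<in> cochains \<sigma>"
proof -
  have "dbas xs \<sigma> \<tau> \<noteq> 0 \<Longrightarrow> \<tau> \<subseteq> \<sigma>" for \<tau>
  proof -
    assume "dbas xs \<sigma> \<tau> \<noteq> 0"
    then have "(\<Sum>x\<in>\<sigma>. if \<tau> = \<sigma> - {x} \<and> cnd \<sigma> x then sg \<sigma> x else 0) \<noteq> 0" unfolding dbas_eq .
    then obtain x where "x \<in> \<sigma>" "(if \<tau> = \<sigma> - {x} \<and> cnd \<sigma> x then sg \<sigma> x else 0) \<noteq> 0"
      by (rule sum.not_neutral_contains_not_neutral)
    then show ?thesis by (auto split: if_splits)
  qed
  then show ?thesis unfolding cochains_def by auto
qed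

lemma dop_cochains: "dop f \<in> cochains A"
  by (rule ops_cochains) (use dbas_cochains cochains_mono in blast)

lemma dop_cochainsA': "f \<in> cochains A' \<Longrightarrow> dop f \<in> cochains A'"
proof (rule ops_cochains)
  fix \<sigma> assume "f \<in> cochains A'" "f \<sigma> \<noteq> 0"
  then have "\<sigma> \<subseteq> A'" unfolding cochains_def by auto
  then show "dbas xs \<sigma> \<in> cochains A'" using dbas_cochains cochains_mono by blast
qed

lemma Eop_cochains: "b \<in> A \<Longrightarrow> Eop b f \<in> cochains A"
  unfolding Eop_def by (rule ops_cochains) (use optb_cochains in auto)

lemma hop_cochains: "b \<in> A \<Longrightarrow> hop b f \<in> cochains A"
  unfolding hop_def by (rule ops_cochains) (use hk_cochains in auto)

lemma x0_notin_sub: "\<sigma> \<subseteq> A' \<Longrightarrow> x0 \<notin> \<sigma>"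
  using x0_notin by auto

lemma Eop_kill: "f \<in> cochains A' \<Longrightarrow> Eop b f = (\<lambda>t. 0)"
proof -
  assume f: "f \<in> cochains A'"
  have "Eop b f = ops (\<lambda>\<sigma> t. 0) f" unfolding Eop_def
  proof (rule ops_cong)
    fix \<sigma> assume "\<sigma> \<in> Pow A" "f \<sigma> \<noteq> 0"
    then have "x0 \<notin> \<sigma>" using f x0_notin_sub unfolding cochains_def by auto
    then show "optb (e b \<sigma>) = (\<lambda>t. 0)" unfolding optb_def e_def by simp
  qed
  then show ?thesis by (simp add: ops_def)
qed

lemma hop_kill: "f \<in> cochains A' \<Longrightarrow> hop b f = (\<lambda>t. 0)"
proof -
  assume f: "f \<in> cochains A'"
  have "hop b f = ops (\<lambda>\<sigma> t. 0) f" unfolding hop_def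
  proof (rule ops_cong)
    fix \<sigma> assume "\<sigma> \<in> Pow A" "f \<sigma> \<noteq> 0"
    then have "x0 \<notin> \<sigma>" using f x0_notin_sub unfolding cochains_def by auto
    then show "hk b \<sigma> = (\<lambda>t. 0)" unfolding hk_def by simp
  qed
  then show ?thesis by (simp add: ops_def)
qed

lemma T_basis: assumes r: "rep b" and s: "\<sigma> \<in> Pow A"
  shows "(\<lambda>\<tau>. bas \<sigma> \<tau> - optb (e b \<sigma>) \<tau> - dop (hk b \<sigma>) \<tau> - ops (hk b) (dbas xs \<sigma>) \<tau>) \<in> cochains A'"
proof -
  have bA: "b \<in> A" using rep_facts[OF r] by auto
  have sA: "\<sigma> \<subseteq> A" using s by auto
  show ?thesis
  proof (cases "x0 \<in> \<sigma>")
    case True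
    have c1: "(\<lambda>\<tau>. bas \<sigma> \<tau> - optb (e b \<sigma>) \<tau> - dop (hk b \<sigma>) \<tau> - ops (hk b) (dbas xs \<sigma>) \<tau>) \<in> cochains A"
      by (intro cochains_diff bas_cochains sA optb_cochains[OF bA sA] dop_cochains)
        (unfold hop_def[symmetric], rule hop_cochains[OF bA])
    show ?thesis unfolding cochains_def
    proof (intro CollectI allI impI)
      fix \<tau> assume nz: "bas \<sigma> \<tau> - optb (e b \<sigma>) \<tau> - dop (hk b \<sigma>) \<tau> - ops (hk b) (dbas xs \<sigma>) \<tau> \<noteq> 0"
      then have "x0 \<notin> \<tau>" using T0[OF r sA True] by auto
      moreover have "\<tau> \<subseteq> A" using c1 nz unfolding cochains_def by auto
      ultimately show "\<tau> \<subseteq> A'" using A_eq by auto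
    qed
  next
    case False
    have "e b \<sigma> = None" using False unfolding e_def by simp
    moreover have "hk b \<sigma> = (\<lambda>t. 0)" using False unfolding hk_def by simp
    moreover have "ops (hk b) (dbas xs \<sigma>) \<tau> = 0" for \<tau>
    proof -
      have hz0: "hk b (\<sigma> - {x}) = (\<lambda>t. 0)" for x using False unfolding hk_def by simp
      show ?thesis unfolding HD_eq[OF sA] by (intro sum.neutral ballI) (simp add: hz0)
    qed
    moreover have "\<sigma> \<subseteq> A'" using sA False A_eq by auto
    ultimately show ?thesis using bas_cochains[of \<sigma> A'] by (simp add: optb_def ops_def)
  qed
qed

lemma L1: assumes r: "rep b" and f: "f \<in> cochains A"
  shows "(\<lambda>\<tau>. f \<tau> - Eop b f \<tau> - dop (hop b f) \<tau> - hop b (dop f) \<tau>) \<in> cochains A'"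
proof -
  define K where "K \<sigma> = (\<lambda>\<tau>. bas \<sigma> \<tau> - optb (e b \<sigma>) \<tau> - dop (hk b \<sigma>) \<tau> - ops (hk b) (dbas xs \<sigma>) \<tau>)" for \<sigma>
  have "ops K f = (\<lambda>\<tau>. ops bas f \<tau> - ops (\<lambda>\<sigma>. optb (e b \<sigma>)) f \<tau> - ops (\<lambda>\<sigma>. dop (hk b \<sigma>)) f \<tau> - ops (\<lambda>\<sigma>. ops (hk b) (dbas xs \<sigma>)) f \<tau>)"
    unfolding ops_def K_def by (simp add: right_diff_distrib sum_subtractf)
  also have "\<dots> = (\<lambda>\<tau>. f \<tau> - Eop b f \<tau> - dop (hop b f) \<tau> - hop b (dop f) \<tau>)"
    unfolding expand[OF f] Eop_def hop_def ops_comp ..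
  finally have eq: "ops K f = (\<lambda>\<tau>. f \<tau> - Eop b f \<tau> - dop (hop b f) \<tau> - hop b (dop f) \<tau>)" .
  have "ops K f \<in> cochains A'"
    by (rule ops_cochains) (unfold K_def, rule T_basis[OF r], simp)
  then show ?thesis using eq by simp
qed

lemma dd': "dop (dop f) = (\<lambda>t. 0)"
  using dd[of f] unfolding dcx_ops .

lemma Ecomm: assumes r: "rep b" and f: "f \<in> cochains A"
  shows "(\<lambda>\<tau>. dop (Eop b f) \<tau> - Eop b (dop f) \<tau>) \<in> cochains A'"
proof -
  have 1: "(\<lambda>\<tau>. dop f \<tau> - Eop b (dop f) \<tau> - dop (hop b (dop f)) \<tau> - hop b (dop (dop f)) \<tau>) \<in> cochains A'"
    by (rule L1[OF r dop_cochains])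
  have h0: "hop b (dop (dop f)) = (\<lambda>t. 0)" unfolding dd' hop_def ops_zero ..
  have 2: "dop (\<lambda>\<tau>. f \<tau> - Eop b f \<tau> - dop (hop b f) \<tau> - hop b (dop f) \<tau>) \<in> cochains A'"
    by (rule dop_cochainsA'[OF L1[OF r f]])
  have e2: "dop (\<lambda>\<tau>. f \<tau> - Eop b f \<tau> - dop (hop b f) \<tau> - hop b (dop f) \<tau>)
     = (\<lambda>\<tau>. dop f \<tau> - dop (Eop b f) \<tau> - dop (dop (hop b f)) \<tau> - dop (hop b (dop f)) \<tau>)"
    unfolding ops_diff ..
  have 3: "(\<lambda>\<tau>. (dop f \<tau> - Eop b (dop f) \<tau> - dop (hop b (dop f)) \<tau> - hop b (dop (dop f)) \<tau>)
       - (dop f \<tau> - dop (Eop b f) \<tau> - dop (dop (hop b f)) \<tau> - dop (hop b (dop f)) \<tau>)) \<in> cochains A'"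
    using cochains_diff[OF 1 2[unfolded e2]] .
  have "(\<lambda>\<tau>. (dop f \<tau> - Eop b (dop f) \<tau> - dop (hop b (dop f)) \<tau> - hop b (dop (dop f)) \<tau>)
       - (dop f \<tau> - dop (Eop b f) \<tau> - dop (dop (hop b f)) \<tau> - dop (hop b (dop f)) \<tau>))
      = (\<lambda>\<tau>. dop (Eop b f) \<tau> - Eop b (dop f) \<tau>)"
    unfolding h0 dd' by (rule ext) (simp add: hop_def ops_zero)
  then show ?thesis using 3 by simp
qed


primrec pe :: "'v set list \<Rightarrow> 'v set set \<Rightarrow> 'v set set option" where
  "pe [] \<sigma> = Some \<sigma>"
| "pe (b # bs) \<sigma> = Option.bind (pe bs \<sigma>) (e b)"

definition Pop :: "'v set list \<Rightarrow> ('v set set \<Rightarrow> rat) \<Rightarrow> ('v set set \<Rightarrow> rat)" where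
  "Pop bs = ops (\<lambda>\<sigma>. optb (pe bs \<sigma>))"

lemma pe_sub: "set bs \<subseteq> A \<Longrightarrow> \<sigma> \<subseteq> A \<Longrightarrow> pe bs \<sigma> = Some \<tau> \<Longrightarrow> \<tau> \<subseteq> A"
proof (induction bs arbitrary: \<tau>)
  case Nil then show ?case by simp
next
  case (Cons b bs)
  then obtain \<rho> where "pe bs \<sigma> = Some \<rho>" "e b \<rho> = Some \<tau>" by (cases "pe bs \<sigma>") auto
  then show ?case using Cons e_sub[of b \<rho> \<tau>] by auto
qed

lemma Pop_Nil: "f \<in> cochains A \<Longrightarrow> Pop [] f = f"
  unfolding Pop_def optb_def by (simp add: expand)

lemma optb_zero: "optb None = (\<lambda>t. 0)" unfolding optb_def by simp
lemma optb_some: "optb (Some \<tau>) = bas \<tau>" unfolding optb_def by simp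

lemma Pop_Cons: assumes "set (b # bs) \<subseteq> A" shows "Pop (b # bs) f = Eop b (Pop bs f)"
proof -
  have "Eop b (Pop bs f) = ops (\<lambda>\<sigma>. Eop b (optb (pe bs \<sigma>))) f"
    unfolding Pop_def Eop_def ops_comp ..
  also have "\<dots> = ops (\<lambda>\<sigma>. optb (pe (b # bs) \<sigma>)) f"
  proof (rule ops_cong)
    fix \<sigma> assume s: "\<sigma> \<in> Pow A"
    show "Eop b (optb (pe bs \<sigma>)) = optb (pe (b # bs) \<sigma>)"
    proof (cases "pe bs \<sigma>")
      case None
      then show ?thesis by (simp add: optb_zero Eop_def ops_zero)
    next
      case (Some \<tau>)
      then have "\<tau> \<in> Pow A" using pe_sub[of bs \<sigma> \<tau>] assms s by auto
      then show ?thesis using Some by (simp add: optb_some Eop_def ops_bas)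
    qed
  qed
  finally show ?thesis unfolding Pop_def by simp
qed

lemma Pop_cochains: "set bs \<subseteq> A \<Longrightarrow> Pop bs f \<in> cochains A"
  unfolding Pop_def
proof (rule ops_cochains)
  fix \<sigma> assume b: "set bs \<subseteq> A" and s: "\<sigma> \<in> Pow A"
  show "optb (pe bs \<sigma>) \<in> cochains A"
  proof (cases "pe bs \<sigma>")
    case None then show ?thesis by (simp add: optb_zero cochains_zero)
  next
    case (Some \<tau>) then show ?thesis using pe_sub[OF b _ Some] s by (simp add: optb_some bas_cochains)
  qed
qed

lemma pe_x0: "x0 \<notin> \<sigma> \<Longrightarrow> pe bs \<sigma> = None \<or> pe bs \<sigma> = Some \<sigma>"
proof (induction bs)
  case Nil then show ?case by simp
next
  case (Cons b bs)
  then show ?case by (auto simp: e_def)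
qed

lemma Pop_A': "f \<in> cochains A' \<Longrightarrow> Pop bs f \<in> cochains A'"
  unfolding Pop_def
proof (rule ops_cochains)
  fix \<sigma> assume "f \<in> cochains A'" "f \<sigma> \<noteq> 0"
  then have s: "\<sigma> \<subseteq> A'" unfolding cochains_def by auto
  then have "x0 \<notin> \<sigma>" using x0_notin by auto
  then show "optb (pe bs \<sigma>) \<in> cochains A'"
    using pe_x0[of \<sigma> bs] s by (auto simp: optb_def intro: bas_cochains cochains_zero)
qed

lemma Pop_comm: assumes "set bs \<subseteq> Collect rep" "f \<in> cochains A"
  shows "(\<lambda>\<tau>. dop (Pop bs f) \<tau> - Pop bs (dop f) \<tau>) \<in> cochains A'"
  using assms(1)
proof (induction bs)
  case Nil
  then show ?case using Pop_Nil[OF assms(2)] Pop_Nil[OF dop_cochains] by (simp add: cochains_zero)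
next
  case (Cons b bs)
  have r: "rep b" using Cons.prems by auto
  have bsA: "set (b # bs) \<subseteq> A" using Cons.prems rep_facts by auto
  have g: "Pop bs f \<in> cochains A" by (rule Pop_cochains) (use bsA in auto)
  have 1: "(\<lambda>\<tau>. dop (Eop b (Pop bs f)) \<tau> - Eop b (dop (Pop bs f)) \<tau>) \<in> cochains A'"
    by (rule Ecomm[OF r g])
  have "Eop b (\<lambda>\<tau>. dop (Pop bs f) \<tau> - Pop bs (dop f) \<tau>) = (\<lambda>t. 0)"
    by (rule Eop_kill[OF Cons.IH]) (use Cons.prems in auto)
  then have 2: "(\<lambda>\<tau>. Eop b (dop (Pop bs f)) \<tau> - Eop b (Pop bs (dop f)) \<tau>) = (\<lambda>t. 0)"
    unfolding Eop_def ops_diff .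
  have "(\<lambda>\<tau>. dop (Pop (b # bs) f) \<tau> - Pop (b # bs) (dop f) \<tau>) = (\<lambda>\<tau>. dop (Eop b (Pop bs f)) \<tau> - Eop b (dop (Pop bs f)) \<tau>)"
  proof (rule ext)
    fix \<tau>
    have "Eop b (dop (Pop bs f)) \<tau> = Eop b (Pop bs (dop f)) \<tau>" using fun_cong[OF 2, of \<tau>] by simp
    then show "dop (Pop (b # bs) f) \<tau> - Pop (b # bs) (dop f) \<tau> = dop (Eop b (Pop bs f)) \<tau> - Eop b (dop (Pop bs f)) \<tau>"
      unfolding Pop_Cons[OF bsA] by simp
  qed
  then show ?case using 1 by simp
qed

lemma ops_sum: "ops M (\<lambda>t. \<Sum>g\<in>S. c g * g t) = (\<lambda>\<tau>. \<Sum>g\<in>S. c g * ops M g \<tau>)"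
proof (rule ext)
  fix \<tau>
  have "ops M (\<lambda>t. \<Sum>g\<in>S. c g * g t) \<tau> = (\<Sum>\<sigma>\<in>Pow A. \<Sum>g\<in>S. c g * g \<sigma> * M \<sigma> \<tau>)"
    unfolding ops_def by (simp add: sum_distrib_right)
  also have "\<dots> = (\<Sum>g\<in>S. \<Sum>\<sigma>\<in>Pow A. c g * g \<sigma> * M \<sigma> \<tau>)" by (rule sum.swap)
  also have "\<dots> = (\<Sum>g\<in>S. c g * ops M g \<tau>)" unfolding ops_def by (simp add: sum_distrib_left mult.assoc)
  finally show "ops M (\<lambda>t. \<Sum>g\<in>S. c g * g t) \<tau> = (\<Sum>g\<in>S. c g * ops M g \<tau>)" .
qed

lemma cochains_sum: "(\<And>g. g \<in> S \<Longrightarrow> F g \<in> cochains B) \<Longrightarrow> (\<lambda>t. \<Sum>g\<in>S. c g * F g t) \<in> cochains B"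
proof -
  assume h: "\<And>g. g \<in> S \<Longrightarrow> F g \<in> cochains B"
  show ?thesis unfolding cochains_def
  proof (intro CollectI allI impI)
    fix \<sigma> assume "(\<Sum>g\<in>S. c g * F g \<sigma>) \<noteq> 0"
    then obtain g where "g \<in> S" "c g * F g \<sigma> \<noteq> 0" by (rule sum.not_neutral_contains_not_neutral)
    then show "\<sigma> \<subseteq> B" using h[of g] unfolding cochains_def by auto
  qed
qed

lemma qspan_cochains: "(\<And>g. g \<in> G \<Longrightarrow> g \<in> cochains B) \<Longrightarrow> f \<in> qspan G \<Longrightarrow> f \<in> cochains B"
proof -
  assume h: "\<And>g. g \<in> G \<Longrightarrow> g \<in> cochains B" and f: "f \<in> qspan G"
  obtain S c where S: "finite S" "S \<subseteq> G" "f = (\<lambda>t. \<Sum>g\<in>S. c g * g t)" using f unfolding qspan_def by blast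
  show ?thesis unfolding S(3) by (rule cochains_sum) (use h S(2) in auto)
qed

abbreviation "gens \<equiv> Igens xs \<union> {bas \<sigma> | \<sigma>. \<sigma> \<subseteq> A'}"

lemma Vpre_gens: "Vpre xs = qspan gens"
  unfolding Vpre_def ..

lemma gens_cochains: "g \<in> gens \<Longrightarrow> g \<in> cochains A"
proof -
  assume "g \<in> gens"
  moreover have "x0 \<in> A" using A_eq by auto
  ultimately show ?thesis unfolding Igens_def edges_def
    by (auto intro!: cochains_diff bas_cochains simp: A_eq)
qed

lemma Vpre_cochains: "c \<in> Vpre xs \<Longrightarrow> c \<in> cochains A"
  unfolding Vpre_gens by (rule qspan_cochains[OF gens_cochains])

lemma A'_Vpre: assumes "f \<in> cochains A'" shows "f \<in> Vpre xs"
proof -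
  have fA: "f \<in> cochains A" using assms cochains_mono A_eq by auto
  have "ops bas f \<in> qspan gens"
  proof (rule ops_qspan)
    fix \<sigma> assume "\<sigma> \<in> Pow A" "f \<sigma> \<noteq> 0"
    then have "\<sigma> \<subseteq> A'" using assms unfolding cochains_def by auto
    then show "bas \<sigma> \<in> qspan gens" by (intro qspan_gen) blast
  qed
  then show ?thesis unfolding expand[OF fA] Vpre_gens .
qed


lemma igen1: assumes "(u, v) \<in> edges xs" "Y \<subseteq> A - {x0, u, v}"
  shows "(\<lambda>t. bas (insert x0 (insert u Y)) t - bas (insert x0 (insert v Y)) t) \<in> Vpre xs"
  unfolding Vpre_gens by (rule qspan_gen) (unfold Igens_def, use assms in blast)

lemma igen2: assumes "(u, v) \<in> edges xs" "Y \<subseteq> A - {x0, u, v}"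
  shows "bas (insert x0 (insert u (insert v Y))) \<in> Vpre xs"
  unfolding Vpre_gens by (rule qspan_gen) (unfold Igens_def, use assms in blast)

lemma gen_E: assumes b: "b \<in> A'" and s: "\<sigma> \<subseteq> A"
  shows "(\<lambda>t. bas \<sigma> t - optb (e b \<sigma>) t) \<in> Vpre xs"
proof (cases "x0 \<in> \<sigma>")
  case False
  then have "e b \<sigma> = None" unfolding e_def by simp
  moreover have "\<sigma> \<subseteq> A'" using False s A_eq by auto
  ultimately show ?thesis using A'_Vpre[OF bas_cochains[of \<sigma> A']] by (simp add: optb_zero)
next
  case x0s: True
  have fin: "finite (cls b \<sigma>)" using fin_sub[OF s] unfolding cls_def by auto
  show ?thesis
  proof (cases "cls b \<sigma> = {}")
    case True
    then have "e b \<sigma> = Some \<sigma>" using x0s unfolding e_def by simp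
    then show ?thesis using qspan_zero Vpre_gens by (simp add: optb_some)
  next
    case Cne: False
    show ?thesis
    proof (cases "card (cls b \<sigma>) = 1")
      case True
      then obtain x where x: "cls b \<sigma> = {x}" by (meson card_1_singletonE)
      then have xx: "x \<in> \<sigma>" "x \<noteq> x0" "x0 \<inter> x = x0 \<inter> b" unfolding cls_def by auto
      have eS: "e b \<sigma> = Some (insert b (\<sigma> - {x}))" using x0s True x unfolding e_def by simp
      show ?thesis
      proof (cases "x = b")
        case True
        then have "insert b (\<sigma> - {x}) = \<sigma>" using xx by auto
        then show ?thesis using eS qspan_zero Vpre_gens by (simp add: optb_some)
      next
        case False
        have xA: "x \<in> A'" using xx s A_eq by auto
        have bns: "b \<notin> \<sigma>"
        proof
          assume "b \<in> \<sigma>"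
          then have "b \<in> cls b \<sigma>" using b x0_notin unfolding cls_def by auto
          then show False using x False by auto
        qed
        have ed: "(x, b) \<in> edges xs" unfolding edges_def using xA b xx False by auto
        define Y where "Y = \<sigma> - {x0, x}"
        have Y: "Y \<subseteq> A - {x0, x, b}" unfolding Y_def using s bns by auto
        have "insert x0 (insert x Y) = \<sigma>" unfolding Y_def using x0s xx by auto
        moreover have "insert x0 (insert b Y) = insert b (\<sigma> - {x})" unfolding Y_def using x0s xx by auto
        ultimately show ?thesis using igen1[OF ed Y] eS by (simp add: optb_some)
      qed
    next
      case False
      then have eN: "e b \<sigma> = None" using x0s Cne unfolding e_def by simp
      obtain u where u: "u \<in> cls b \<sigma>" using Cne by auto
      have "cls b \<sigma> \<noteq> {u}" using False by auto
      then obtain v where v: "v \<in> cls b \<sigma>" "v \<noteq> u" using u by blast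
      have uv: "u \<in> \<sigma>" "v \<in> \<sigma>" "u \<noteq> x0" "v \<noteq> x0" "x0 \<inter> u = x0 \<inter> v"
        using u v unfolding cls_def by auto
      have ed: "(u, v) \<in> edges xs" unfolding edges_def using uv v(2) s A_eq by auto
      define Y where "Y = \<sigma> - {x0, u, v}"
      have Y: "Y \<subseteq> A - {x0, u, v}" unfolding Y_def using s by auto
      have "insert x0 (insert u (insert v Y)) = \<sigma>" unfolding Y_def using x0s uv by auto
      then show ?thesis using igen2[OF ed Y] eN by (simp add: optb_zero)
    qed
  qed
qed

lemma E_diff_V: assumes b: "b \<in> A'" and g: "g \<in> cochains A"
  shows "(\<lambda>t. g t - Eop b g t) \<in> Vpre xs"
proof -
  have "(\<lambda>t. g t - Eop b g t) = ops (\<lambda>\<sigma> t. bas \<sigma> t - optb (e b \<sigma>) t) g"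
    unfolding ops_kernel_diff Eop_def expand[OF g] ..
  also have "\<dots> \<in> Vpre xs" unfolding Vpre_gens
    by (rule ops_qspan) (use gen_E[OF b] Vpre_gens in auto)
  finally show ?thesis .
qed

lemma P_diff_V: assumes "set bs \<subseteq> A'" "f \<in> cochains A"
  shows "(\<lambda>t. f t - Pop bs f t) \<in> Vpre xs"
  using assms(1)
proof (induction bs)
  case Nil
  then show ?case using Pop_Nil[OF assms(2)] qspan_zero Vpre_gens by simp
next
  case (Cons b bs)
  have bsA: "set (b # bs) \<subseteq> A" using Cons.prems A_eq by auto
  have g: "Pop bs f \<in> cochains A" by (rule Pop_cochains) (use bsA in auto)
  have 1: "(\<lambda>t. f t - Pop bs f t) \<in> Vpre xs" using Cons by auto
  have 2: "(\<lambda>t. Pop bs f t - Eop b (Pop bs f) t) \<in> Vpre xs"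
    by (rule E_diff_V[OF _ g]) (use Cons.prems in auto)
  have "(\<lambda>t. f t - Pop (b # bs) f t) = (\<lambda>t. (f t - Pop bs f t) + (Pop bs f t - Eop b (Pop bs f) t))"
    unfolding Pop_Cons[OF bsA] by (rule ext) simp
  then show ?case using qspan_add[OF 1[unfolded Vpre_gens] 2[unfolded Vpre_gens]] Vpre_gens by simp
qed

lemma hop_V: assumes r: "rep b" shows "hop b f \<in> Vpre xs"
  unfolding hop_def Vpre_gens
proof (rule ops_qspan)
  fix \<sigma> assume s: "\<sigma> \<in> Pow A"
  show "hk b \<sigma> \<in> qspan gens"
  proof (cases "x0 \<in> \<sigma> \<and> b \<notin> \<sigma> \<and> cls b \<sigma> \<noteq> {}")
    case True
    then obtain v where v: "v \<in> \<sigma>" "v \<noteq> x0" "x0 \<inter> v = x0 \<inter> b" unfolding cls_def by auto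
    have bA: "b \<in> A'" using rep_facts[OF r] by auto
    have vb: "b \<noteq> v" using True v by auto
    have ed: "(b, v) \<in> edges xs" unfolding edges_def using bA v vb s A_eq by auto
    define Y where "Y = \<sigma> - {x0, b, v}"
    have Y: "Y \<subseteq> A - {x0, b, v}" unfolding Y_def using s by auto
    have "insert x0 (insert b (insert v Y)) = insert b \<sigma>" unfolding Y_def using True v by auto
    then have "bas (insert b \<sigma>) \<in> qspan gens" using igen2[OF ed Y] Vpre_gens by simp
    then show ?thesis using True qspan_scale unfolding hk_def by auto
  next
    case False
    then have "hk b \<sigma> = (\<lambda>t. 0)" unfolding hk_def by (rule if_not_P)
    then show ?thesis using qspan_zero by simp
  qed
qed


lemma card_not1: assumes "finite C" "u \<in> C" "v \<in> C" "u \<noteq> v" shows "card C \<noteq> 1" "C \<noteq> {}"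
proof -
  have "card {u, v} \<le> card C" using assms by (intro card_mono) auto
  then show "card C \<noteq> 1" using assms(4) by auto
  show "C \<noteq> {}" using assms by auto
qed

lemma e_cases: "e b \<tau> = None \<or> e b \<tau> = Some \<tau> \<or> e b \<tau> = Some (insert b (\<tau> - cls b \<tau>))"
  unfolding e_def by auto

lemma pe_nt: assumes "set bs \<subseteq> A" "\<sigma> \<subseteq> A" "u \<in> \<sigma>" "v \<in> \<sigma>" "u \<noteq> v" "u \<noteq> x0" "v \<noteq> x0" "x0 \<inter> u = x0 \<inter> v"
  shows "(pe bs \<sigma> = None \<or> (\<exists>\<tau>. pe bs \<sigma> = Some \<tau> \<and> u \<in> \<tau> \<and> v \<in> \<tau> \<and> \<tau> \<subseteq> A))
     \<and> ((\<exists>b\<in>set bs. x0 \<inter> b = x0 \<inter> u) \<longrightarrow> pe bs \<sigma> = None)"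
  using assms(1)
proof (induction bs)
  case Nil then show ?case using assms by auto
next
  case (Cons b bs)
  then have IH: "(pe bs \<sigma> = None \<or> (\<exists>\<tau>. pe bs \<sigma> = Some \<tau> \<and> u \<in> \<tau> \<and> v \<in> \<tau> \<and> \<tau> \<subseteq> A))
     \<and> ((\<exists>b\<in>set bs. x0 \<inter> b = x0 \<inter> u) \<longrightarrow> pe bs \<sigma> = None)" by auto
  have bA: "b \<in> A" using Cons.prems by auto
  show ?case
  proof (cases "pe bs \<sigma>")
    case None then show ?thesis by simp
  next
    case (Some \<tau>)
    then have t: "u \<in> \<tau>" "v \<in> \<tau>" "\<tau> \<subseteq> A" and nb: "\<not> (\<exists>b\<in>set bs. x0 \<inter> b = x0 \<inter> u)" using IH by auto
    have ft: "finite (cls b \<tau>)" using fin_sub[OF t(3)] unfolding cls_def by auto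
    show ?thesis
    proof (cases "x0 \<inter> b = x0 \<inter> u")
      case True
      have "u \<in> cls b \<tau>" "v \<in> cls b \<tau>" using t True assms(6-8) unfolding cls_def by auto
      note cn = card_not1[OF ft this assms(5)]
      have "e b \<tau> = None" unfolding e_def using cn by auto
      then show ?thesis using Some by simp
    next
      case False
      have "u \<notin> cls b \<tau>" "v \<notin> cls b \<tau>" using False assms(8) unfolding cls_def by auto
      then have "e b \<tau> = None \<or> (\<exists>\<tau>'. e b \<tau> = Some \<tau>' \<and> u \<in> \<tau>' \<and> v \<in> \<tau>' \<and> \<tau>' \<subseteq> A)"
        using e_cases[of b \<tau>] t e_sub[OF bA t(3)] by blast
      then show ?thesis using Some False nb by auto
    qed
  qed
qed

lemma cls_ins_no: "\<not> (y \<noteq> x0 \<and> x0 \<inter> y = x0 \<inter> b) \<Longrightarrow> cls b (insert y \<sigma>) = cls b \<sigma>"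
  unfolding cls_def by auto

lemma pe_pair: assumes "set bs \<subseteq> A'" "u \<in> A'" "v \<in> A'" "u \<noteq> v" "x0 \<inter> u = x0 \<inter> v" "Y \<subseteq> A - {x0, u, v}"
  shows "pe bs (insert x0 (insert u Y)) = pe bs (insert x0 (insert v Y)) \<or>
    ((\<forall>b\<in>set bs. x0 \<inter> b \<noteq> x0 \<inter> u) \<and> (\<exists>Y'. Y' \<subseteq> A - {x0, u, v} \<and>
      pe bs (insert x0 (insert u Y)) = Some (insert x0 (insert u Y')) \<and>
      pe bs (insert x0 (insert v Y)) = Some (insert x0 (insert v Y'))))"
  using assms(1)
proof (induction bs)
  case Nil then show ?case using assms(6) by auto
next
  case (Cons b bs)
  have ux: "u \<noteq> x0" "v \<noteq> x0" using assms(2,3) x0_notin by auto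
  have bA': "b \<in> A'" using Cons.prems by auto
  have bx: "b \<noteq> x0" using bA' x0_notin by auto
  from Cons.IH Cons.prems have IH: "pe bs (insert x0 (insert u Y)) = pe bs (insert x0 (insert v Y)) \<or>
    ((\<forall>b\<in>set bs. x0 \<inter> b \<noteq> x0 \<inter> u) \<and> (\<exists>Y'. Y' \<subseteq> A - {x0, u, v} \<and>
      pe bs (insert x0 (insert u Y)) = Some (insert x0 (insert u Y')) \<and>
      pe bs (insert x0 (insert v Y)) = Some (insert x0 (insert v Y'))))" by auto
  show ?case
  proof (cases "pe bs (insert x0 (insert u Y)) = pe bs (insert x0 (insert v Y))")
    case True then show ?thesis by simp
  next
    case False
    then obtain Y' where Y': "Y' \<subseteq> A - {x0, u, v}" "pe bs (insert x0 (insert u Y)) = Some (insert x0 (insert u Y'))"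
      "pe bs (insert x0 (insert v Y)) = Some (insert x0 (insert v Y'))" and nb: "\<forall>b\<in>set bs. x0 \<inter> b \<noteq> x0 \<inter> u"
      using IH by blast
    define t1 where "t1 = insert x0 (insert u Y')"
    define t2 where "t2 = insert x0 (insert v Y')"
    have p1: "pe (b # bs) (insert x0 (insert u Y)) = e b t1" using Y'(2) unfolding t1_def by simp
    have p2: "pe (b # bs) (insert x0 (insert v Y)) = e b t2" using Y'(3) unfolding t2_def by simp
    have x0t: "x0 \<in> t1" "x0 \<in> t2" unfolding t1_def t2_def by auto
    have fY: "finite Y'" using Y'(1) finite_subset by blast
    have fC: "finite (cls b Y')" using fY unfolding cls_def by auto
    show ?thesis
    proof (cases "x0 \<inter> b = x0 \<inter> u")
      case True
      have c1: "cls b t1 = insert u (cls b Y')" unfolding t1_def cls_def using True ux by auto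
      have c2: "cls b t2 = insert v (cls b Y')" unfolding t2_def cls_def using True ux assms(5) by auto
      show ?thesis
      proof (cases "cls b Y' = {}")
        case True
        have "t1 - {u} = insert x0 Y'" "t2 - {v} = insert x0 Y'" unfolding t1_def t2_def using Y'(1) ux by auto
        then have "e b t1 = e b t2" unfolding e_def using x0t c1 c2 True by simp
        then show ?thesis using p1 p2 by simp
      next
        case False
        then obtain w where w: "w \<in> cls b Y'" by auto
        have wu: "w \<noteq> u" "w \<noteq> v" using w Y'(1) unfolding cls_def by auto
        have "finite (cls b t1)" "finite (cls b t2)" using fC c1 c2 by auto
        then have "card (cls b t1) \<noteq> 1" "cls b t1 \<noteq> {}" "card (cls b t2) \<noteq> 1" "cls b t2 \<noteq> {}"
          using card_not1[of "cls b t1" u w] card_not1[of "cls b t2" v w] c1 c2 w wu by auto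
        then have "e b t1 = None" "e b t2 = None" unfolding e_def by auto
        then show ?thesis using p1 p2 by simp
      qed
    next
      case nc: False
      have nu: "x0 \<inter> u \<noteq> x0 \<inter> b" using nc by (rule not_sym)
      have nv: "x0 \<inter> v \<noteq> x0 \<inter> b" using nu assms(5) by simp
      have "cls b t1 = cls b (insert u Y')" unfolding t1_def by (rule cls_ins_no) simp
      also have "\<dots> = cls b Y'" by (rule cls_ins_no) (simp add: nu)
      finally have c1: "cls b t1 = cls b Y'" .
      have "cls b t2 = cls b (insert v Y')" unfolding t2_def by (rule cls_ins_no) simp
      also have "\<dots> = cls b Y'" by (rule cls_ins_no) (simp add: nv)
      finally have c2: "cls b t2 = cls b Y'" .
      have bu: "b \<noteq> u" "b \<noteq> v" using nc assms(5) by auto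
      have nb2: "\<forall>b'\<in>set (b # bs). x0 \<inter> b' \<noteq> x0 \<inter> u" using nb nc by auto
      show ?thesis
      proof (cases "cls b Y' = {}")
        case True
        then have "e b t1 = Some t1" "e b t2 = Some t2" unfolding e_def using x0t c1 c2 by auto
        then have h1: "pe (b # bs) (insert x0 (insert u Y)) = Some (insert x0 (insert u Y'))"
          and h2: "pe (b # bs) (insert x0 (insert v Y)) = Some (insert x0 (insert v Y'))"
          using p1 p2 unfolding t1_def t2_def by simp_all
        show ?thesis using nb2 Y'(1) h1 h2 by (intro disjI2 conjI exI[of _ Y']) simp_all
      next
        case CN: False
        show ?thesis
        proof (cases "card (cls b Y') = 1")
          case True
          define Y'' where "Y'' = insert b (Y' - cls b Y')"
          have "e b t1 = Some (insert b (t1 - cls b Y'))" "e b t2 = Some (insert b (t2 - cls b Y'))"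
            unfolding e_def using x0t c1 c2 CN True by auto
          moreover have nC: "x0 \<notin> cls b Y'" "u \<notin> cls b Y'" "v \<notin> cls b Y'"
            using Y'(1) unfolding cls_def by blast+
          moreover have "insert b (t1 - cls b Y') = insert x0 (insert u Y'')"
            unfolding t1_def Y''_def using nC by blast
          moreover have "insert b (t2 - cls b Y') = insert x0 (insert v Y'')"
            unfolding t2_def Y''_def using nC by blast
          moreover have "Y'' \<subseteq> A - {x0, u, v}" unfolding Y''_def using Y'(1) bA' bx bu A_eq by auto
          ultimately have h1: "pe (b # bs) (insert x0 (insert u Y)) = Some (insert x0 (insert u Y''))"
            and h2: "pe (b # bs) (insert x0 (insert v Y)) = Some (insert x0 (insert v Y''))"
            and h3: "Y'' \<subseteq> A - {x0, u, v}"
            using p1 p2 by simp_all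
          show ?thesis using nb2 h3 h1 h2 by (intro disjI2 conjI exI[of _ Y'']) simp_all
        next
          case False
          then have "e b t1 = None" "e b t2 = None" unfolding e_def using x0t c1 c2 CN by auto
          then show ?thesis using p1 p2 by simp
        qed
      qed
    qed
  qed
qed


lemma rep_exists: assumes u: "u \<in> A'" shows "\<exists>b. rep b \<and> x0 \<inter> b = x0 \<inter> u"
proof -
  define I where "I = {i. 1 \<le> i \<and> i < length xs \<and> x0 \<inter> xs ! i = x0 \<inter> u}"
  obtain j where j: "1 \<le> j" "j < length xs" "u = xs ! j" using u A'_nth by blast
  have jI: "j \<in> I" unfolding I_def using j by auto
  have fI: "finite I" unfolding I_def by auto
  define m where "m = Min I"
  have mI: "m \<in> I" unfolding m_def using fI jI Min_in by blast
  have m: "1 \<le> m" "m < length xs" "x0 \<inter> xs ! m = x0 \<inter> u" using mI unfolding I_def by auto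
  have bA: "xs ! m \<in> A'" unfolding A'_nth using m by blast
  have "rep (xs ! m)" unfolding rep_def
  proof (intro conjI bA ballI impI)
    fix y assume y: "y \<in> A'" "x0 \<inter> y = x0 \<inter> xs ! m"
    obtain k where k: "1 \<le> k" "k < length xs" "y = xs ! k" using y(1) A'_nth by blast
    have "k \<in> I" unfolding I_def using k y(2) m(3) by auto
    then have "m \<le> k" unfolding m_def using fI by simp
    then show "\<not> bf y (xs ! m)" using before_nth[OF k(2) m(2)] k(3) by simp
  qed
  then show ?thesis using m(3) by blast
qed

lemma Pop_bas: "set bs \<subseteq> A \<Longrightarrow> \<sigma> \<subseteq> A \<Longrightarrow> Pop bs (bas \<sigma>) = optb (pe bs \<sigma>)"
  unfolding Pop_def by (rule ops_bas) simp

lemma Pop_gen: assumes bs: "set bs = Collect rep" and g: "g \<in> gens"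
  shows "Pop bs g \<in> cochains A'"
proof -
  have bsA': "set bs \<subseteq> A'" using bs rep_facts by auto
  have bsA: "set bs \<subseteq> A" using bsA' A_eq by auto
  have x0A: "x0 \<in> A" using A_eq by auto
  have has_rep: "\<exists>b\<in>set bs. x0 \<inter> b = x0 \<inter> u" if "u \<in> A'" for u
    using rep_exists[OF that] bs by auto
  from g consider (a) \<sigma> where "g = bas \<sigma>" "\<sigma> \<subseteq> A'"
    | (b) u v Y where "g = (\<lambda>t. bas (insert x0 (insert u Y)) t - bas (insert x0 (insert v Y)) t)"
        "(u, v) \<in> edges xs" "Y \<subseteq> A - {x0, u, v}"
    | (c) u v Y where "g = bas (insert x0 (insert u (insert v Y)))" "(u, v) \<in> edges xs" "Y \<subseteq> A - {x0, u, v}"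
    unfolding Igens_def by blast
  then show ?thesis
  proof cases
    case a
    then show ?thesis using Pop_A'[OF bas_cochains[OF a(2)]] by simp
  next
    case b
    have uv: "u \<in> A'" "v \<in> A'" "x0 \<inter> u = x0 \<inter> v" "u \<noteq> v" using b(2) unfolding edges_def by auto
    have s1: "insert x0 (insert u Y) \<subseteq> A" "insert x0 (insert v Y) \<subseteq> A" using b(3) uv x0A A_eq by auto
    have "pe bs (insert x0 (insert u Y)) = pe bs (insert x0 (insert v Y))"
      using pe_pair[OF bsA' uv(1,2,4,3) b(3)] has_rep[OF uv(1)] by blast
    then have "Pop bs g = (\<lambda>t. 0)" unfolding b(1) Pop_def ops_diff
      unfolding Pop_def[symmetric] Pop_bas[OF bsA s1(1)] Pop_bas[OF bsA s1(2)] by simp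
    then show ?thesis using cochains_zero by simp
  next
    case c
    have uv: "u \<in> A'" "v \<in> A'" "x0 \<inter> u = x0 \<inter> v" "u \<noteq> v" using c(2) unfolding edges_def by auto
    have ux: "u \<noteq> x0" "v \<noteq> x0" using uv x0_notin by auto
    have s1: "insert x0 (insert u (insert v Y)) \<subseteq> A" using c(3) uv x0A A_eq by auto
    have "pe bs (insert x0 (insert u (insert v Y))) = None"
      using pe_nt[OF bsA s1, of u v] uv ux has_rep[OF uv(1)] by auto
    then have "Pop bs g = (\<lambda>t. 0)" unfolding c(1) Pop_bas[OF bsA s1] by (simp add: optb_zero)
    then show ?thesis using cochains_zero by simp
  qed
qed

lemma Pop_V: assumes bs: "set bs = Collect rep" and c: "c \<in> Vpre xs"
  shows "Pop bs c \<in> cochains A'"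
proof -
  obtain S cc where S: "finite S" "S \<subseteq> gens" "c = (\<lambda>t. \<Sum>g\<in>S. cc g * g t)"
    using c unfolding Vpre_gens qspan_def by blast
  have "Pop bs c = (\<lambda>\<tau>. \<Sum>g\<in>S. cc g * Pop bs g \<tau>)" unfolding S(3) Pop_def ops_sum ..
  also have "\<dots> \<in> cochains A'"
  proof (rule cochains_sum)
    fix g assume "g \<in> S" then have "g \<in> gens" using S(2) by blast
    then show "Pop bs g \<in> cochains A'" by (rule Pop_gen[OF bs])
  qed
  finally show ?thesis .
qed


lemma part2_ind: assumes c: "c \<in> Vpre xs" and dc: "dop c \<in> cochains A'"
  shows "set bs \<subseteq> Collect rep \<Longrightarrow> \<exists>b0\<in>Vpre xs. (\<lambda>t. c t - Pop bs c t - dop b0 t) \<in> cochains A'"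
proof (induction bs)
  case Nil
  have cA: "c \<in> cochains A" by (rule Vpre_cochains[OF c])
  have "(\<lambda>t. c t - Pop [] c t - dop (\<lambda>t. 0) t) = (\<lambda>t. 0)"
    unfolding Pop_Nil[OF cA] ops_zero by simp
  moreover have "(\<lambda>t. 0) \<in> Vpre xs" unfolding Vpre_gens by (rule qspan_zero)
  ultimately show ?case using cochains_zero[of A'] by (intro bexI[of _ "\<lambda>t. 0"]) simp_all
next
  case (Cons b bs)
  obtain b0 where b0: "b0 \<in> Vpre xs" "(\<lambda>t. c t - Pop bs c t - dop b0 t) \<in> cochains A'"
    using Cons by auto
  have r: "rep b" using Cons.prems by auto
  have bsA: "set (b # bs) \<subseteq> A" using Cons.prems rep_facts by auto
  have cA: "c \<in> cochains A" by (rule Vpre_cochains[OF c])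
  define g where "g = Pop bs c"
  have gA: "g \<in> cochains A" unfolding g_def by (rule Pop_cochains) (use bsA in auto)
  have dg: "dop g \<in> cochains A'"
  proof -
    have 1: "(\<lambda>\<tau>. dop (Pop bs c) \<tau> - Pop bs (dop c) \<tau>) \<in> cochains A'"
      by (rule Pop_comm[OF _ cA]) (use Cons.prems in auto)
    have 2: "Pop bs (dop c) \<in> cochains A'" by (rule Pop_A'[OF dc])
    have "(\<lambda>\<tau>. (dop (Pop bs c) \<tau> - Pop bs (dop c) \<tau>) + Pop bs (dop c) \<tau>) \<in> cochains A'"
      by (rule cochains_add[OF 1 2])
    then show ?thesis unfolding g_def by simp
  qed
  have L: "(\<lambda>\<tau>. g \<tau> - Eop b g \<tau> - dop (hop b g) \<tau> - hop b (dop g) \<tau>) \<in> cochains A'"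
    by (rule L1[OF r gA])
  have hz: "hop b (dop g) = (\<lambda>t. 0)" by (rule hop_kill[OF dg])
  have PC: "Pop (b # bs) c = Eop b g" unfolding g_def by (rule Pop_Cons[OF bsA])
  define b1 where "b1 = (\<lambda>t. b0 t + hop b g t)"
  have b1V: "b1 \<in> Vpre xs" unfolding b1_def Vpre_gens
    by (rule qspan_add) (use b0(1) hop_V[OF r] Vpre_gens in auto)
  have "(\<lambda>t. (c t - Pop bs c t - dop b0 t) + (g t - Eop b g t - dop (hop b g) t - hop b (dop g) t)) \<in> cochains A'"
    by (rule cochains_add[OF b0(2) L])
  moreover have "(\<lambda>t. (c t - Pop bs c t - dop b0 t) + (g t - Eop b g t - dop (hop b g) t - hop b (dop g) t))
      = (\<lambda>t. c t - Pop (b # bs) c t - dop b1 t)"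
    unfolding PC b1_def ops_add hz by (rule ext) (simp add: g_def)
  ultimately show ?case using b1V by auto
qed

theorem main:
  "(\<forall>c \<in> Vpre xs. dcx xs c \<in> Vpre xs) \<and>
   (\<forall>c \<in> Vpre xs. dcx xs c \<in> cochains A' \<longrightarrow> (\<exists>b \<in> Vpre xs. (\<lambda>t. c t - dcx xs b t) \<in> cochains A'))"
proof -
  have fR: "finite (Collect rep)" using rep_facts finite_subset[of "Collect rep" A'] by auto
  obtain bs where bs: "set bs = Collect rep" using finite_list[OF fR] by blast
  have bsA': "set bs \<subseteq> A'" using bs rep_facts by auto
  have bsR: "set bs \<subseteq> Collect rep" using bs by simp
  have P1: "dop c \<in> Vpre xs" if c: "c \<in> Vpre xs" for c
  proof -
    have cA: "c \<in> cochains A" by (rule Vpre_cochains[OF c])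
    have 1: "(\<lambda>\<tau>. dop (Pop bs c) \<tau> - Pop bs (dop c) \<tau>) \<in> cochains A'" by (rule Pop_comm[OF bsR cA])
    have 2: "dop (Pop bs c) \<in> cochains A'" by (rule dop_cochainsA'[OF Pop_V[OF bs c]])
    have "(\<lambda>\<tau>. dop (Pop bs c) \<tau> - (dop (Pop bs c) \<tau> - Pop bs (dop c) \<tau>)) \<in> cochains A'"
      by (rule cochains_diff[OF 2 1])
    then have 3: "Pop bs (dop c) \<in> Vpre xs" using A'_Vpre by simp
    have 4: "(\<lambda>t. dop c t - Pop bs (dop c) t) \<in> Vpre xs" by (rule P_diff_V[OF bsA' dop_cochains])
    have "(\<lambda>t. (dop c t - Pop bs (dop c) t) + Pop bs (dop c) t) \<in> Vpre xs"
      using qspan_add[OF 4[unfolded Vpre_gens] 3[unfolded Vpre_gens]] Vpre_gens by simp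
    then show ?thesis by simp
  qed
  have P2: "\<exists>b \<in> Vpre xs. (\<lambda>t. c t - dop b t) \<in> cochains A'" if c: "c \<in> Vpre xs" and dc: "dop c \<in> cochains A'" for c
  proof -
    obtain b0 where b0: "b0 \<in> Vpre xs" "(\<lambda>t. c t - Pop bs c t - dop b0 t) \<in> cochains A'"
      using part2_ind[OF c dc bsR] by auto
    have "(\<lambda>t. (c t - Pop bs c t - dop b0 t) + Pop bs c t) \<in> cochains A'"
      by (rule cochains_add[OF b0(2) Pop_V[OF bs c]])
    then have "(\<lambda>t. c t - dop b0 t) \<in> cochains A'" by simp
    then show ?thesis using b0(1) by blast
  qed
  show ?thesis unfolding dcx_ops using P1 P2 by blast
qed

end

theorem lemma3p4:
  fixes xs :: "(complex^'n) set list"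
  assumes "xs \<noteq> []" and "distinct xs" and "subspace_arrangement (set xs)"
    and "\<forall>i j k. 1 \<le> i \<and> i < j \<and> j < k \<and> k < length xs \<and>
           hd xs \<inter> xs ! i = hd xs \<inter> xs ! k \<longrightarrow> hd xs \<inter> xs ! j = hd xs \<inter> xs ! i"
  shows "(\<forall>c \<in> Vpre xs. dcx xs c \<in> Vpre xs) \<and>
         (\<forall>c \<in> Vpre xs. dcx xs c \<in> cochains (set (tl xs)) \<longrightarrow>
            (\<exists>b \<in> Vpre xs. (\<lambda>t. c t - dcx xs b t) \<in> cochains (set (tl xs))))"
proof -
  interpret arr xs using assms(1,2,4) by unfold_locales
  show ?thesis by (rule main)
qed

end
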